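(* Let $\{X_i,i\ge1\}$ be i.i.d. random variables with density $f$, where $f$ is bounded and uniformly continuous on $\mathbb{R}$, and let $K$ be a bounded symmetric probability density on $\mathbb{R}$. For a bandwidth $h=h_n\to0$ set $g_n(X_i,X_j)=K\big(\frac{X_i-X_j}h\big)-E\big[K\big(\frac{X_i-X_j}h\big)\big]$, $g_{1n}(X_i)=E[g_n(X_i,X_j)\mid X_i]$ ($j\ne i$), and $g_{2n}(X_i,X_j)=g_n(X_i,X_j)-g_{1n}(X_i)-g_{1n}(X_j)$. Then, with $c_j=\int K^j(s)\,ds\int f^2(y)\,dy$ for $j=1,2,4$, $E[K((X_1-X_2)/h)]\sim c_1h$, $E[g_{2n}^2(X_1,X_2)]\sim E[K^2((X_1-X_2)/h)]\sim c_2h$, $E[g_{2n}^4(X_1,X_2)]\sim E[K^4((X_1-X_2)/h)]\sim c_4h$. Furthermore $E[g_{1n}^2(X_1)]\sim d_1h^2$ and $E[g_{2n}(X_1,X_3)g_{2n}(X_1,X_4)g_{2n}(X_2,X_3)g_{2n}(X_2,X_4)]\sim d_2h^3$, where $d_1=\int\big[f(x)-\int f^2(y)\,dy\big]^2f(x)\,dx$ and $d_2=\int\int\int K(s)K(t)K(x+s)K(x+t)\,ds\,dt\,dx\int f^4(y)\,dy$.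
   Context: $a_n\sim b_n$ means $a_n/b_n\to1$ as $n\to\infty$; all integrals are over $\mathbb{R}$. *)

theory Defs
  imports "HOL-Probability.Probability" "HOL-Library.Landau_Symbols"
begin

text \<open>E[K((X_i - X_j)/h)], i \<noteq> j; by the i.i.d. assumption this does not depend on i \<noteq> j,
  so we use the pair (X_1, X_2).\<close>
definition EK :: "'a measure \<Rightarrow> (nat \<Rightarrow> 'a \<Rightarrow> real) \<Rightarrow> (real \<Rightarrow> real) \<Rightarrow> real \<Rightarrow> real" where
  "EK M X K h = (\<integral>\<omega>. K ((X 1 \<omega> - X 2 \<omega>) / h) \<partial>M)"

definition gn :: "'a measure \<Rightarrow> (nat \<Rightarrow> 'a \<Rightarrow> real) \<Rightarrow> (real \<Rightarrow> real) \<Rightarrow> real \<Rightarrow> real \<Rightarrow> real \<Rightarrow> real" where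
  "gn M X K h x y = K ((x - y) / h) - EK M X K h"

text \<open>g_{1n}(x) = E[g_n(X_i,X_j) | X_i = x] = \<integral> g_n(x,y) f(y) dy  (j \<noteq> i, X_j independent of X_i
  with density f); this is the canonical version of the conditional expectation.\<close>
definition g1n :: "'a measure \<Rightarrow> (nat \<Rightarrow> 'a \<Rightarrow> real) \<Rightarrow> (real \<Rightarrow> real) \<Rightarrow> (real \<Rightarrow> real) \<Rightarrow> real \<Rightarrow> real \<Rightarrow> real" where
  "g1n M X K f h x = (\<integral>y. gn M X K h x y * f y \<partial>lborel)"

definition g2n :: "'a measure \<Rightarrow> (nat \<Rightarrow> 'a \<Rightarrow> real) \<Rightarrow> (real \<Rightarrow> real) \<Rightarrow> (real \<Rightarrow> real) \<Rightarrow> real \<Rightarrow> real \<Rightarrow> real \<Rightarrow> real" where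
  "g2n M X K f h x y = gn M X K h x y - g1n M X K f h x - g1n M X K f h y"

end

theory Submission
  imports Defs
begin

locale setting =
  fixes M :: "'a measure" and X :: "nat \<Rightarrow> 'a \<Rightarrow> real"
    and f K :: "real \<Rightarrow> real"
  assumes P: "prob_space M"
    and indep: "prob_space.indep_vars M (\<lambda>_. borel) X {1..}"
    and distr: "\<And>i. i \<ge> 1 \<Longrightarrow> distributed M lborel (X i) (\<lambda>x. ennreal (f x))"
    and f_nonneg: "\<And>x. f x \<ge> 0"
    and f_bdd: "bounded (range f)"
    and f_uc: "uniformly_continuous_on UNIV f"
    and K_meas: "K \<in> borel_measurable borel"
    and K_nonneg: "\<And>x. K x \<ge> 0"
    and K_bdd: "bounded (range K)"
    and K_sym: "\<And>x. K (- x) = K x"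
    and K_int: "integrable lborel K"
    and K_one: "(\<integral>x. K x \<partial>lborel) = 1"
begin

sublocale prob_space M by (rule P)

definition "Pf = density lborel (\<lambda>x. ennreal (f x))"

lemma f_cont: "continuous_on UNIV f"
  using f_uc uniformly_continuous_imp_continuous by blast

lemma f_meas[measurable]: "f \<in> borel_measurable borel"
  by (rule borel_measurable_continuous_onI[OF f_cont])

lemma K_meas'[measurable]: "K \<in> borel_measurable borel" by (rule K_meas)

lemma distr_X: "i \<ge> 1 \<Longrightarrow> distr M lborel (X i) = Pf"
  unfolding Pf_def using distr by (simp add: distributed_distr_eq_density)

lemma distr_X_borel: "i \<ge> 1 \<Longrightarrow> distr M borel (X i) = Pf"
proof -
  assume "i \<ge> 1"
  have "distr M borel (X i) = distr M lborel (X i)"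
    by (rule distr_cong) auto
  then show ?thesis using distr_X \<open>i \<ge> 1\<close> by simp
qed

lemma X_meas[measurable]: "i \<ge> 1 \<Longrightarrow> X i \<in> borel_measurable M"
  using distr distributed_measurable by (metis measurable_lborel1)

lemma Pf_prob: "prob_space Pf"
  using distr_X[of 1] prob_space_distr[of "X 1" lborel] X_meas[of 1] by simp

lemma sets_Pf[simp, measurable_cong]: "sets Pf = sets borel"
  by (simp add: Pf_def)

lemma space_Pf[simp]: "space Pf = UNIV"
  by (simp add: Pf_def)

lemma f_bound: obtains S where "S > 0" "\<And>x. f x \<le> S"
proof -
  from f_bdd obtain B where B: "\<And>x. norm (f x) \<le> B" unfolding bounded_iff by auto
  show ?thesis
  proof (rule that[of "max B 1"])
    fix x show "f x \<le> max B 1" using B[of x] by (simp add: abs_le_iff le_max_iff_disj)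
  qed simp
qed

lemma K_bound: obtains B where "B > 0" "\<And>x. K x \<le> B"
proof -
  from K_bdd obtain B where B: "\<And>x. norm (K x) \<le> B" unfolding bounded_iff by auto
  show ?thesis
  proof (rule that[of "max B 1"])
    fix x show "K x \<le> max B 1" using B[of x] by (simp add: abs_le_iff le_max_iff_disj)
  qed simp
qed

lemma nn_f_one: "(\<integral>\<^sup>+x. ennreal (f x) \<partial>lborel) = 1"
proof -
  interpret Q: prob_space Pf by (rule Pf_prob)
  have "emeasure Pf UNIV = 1" using Q.emeasure_space_1 by simp
  then show ?thesis by (simp add: Pf_def emeasure_density)
qed

lemma f_int: "integrable lborel f"
  using nn_f_one f_nonneg by (intro integrableI_nonneg) auto

lemma f_one: "(\<integral>x. f x \<partial>lborel) = 1"
  using nn_f_one f_nonneg f_int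
  by (subst (asm) nn_integral_eq_integral) auto

lemma int_f_mult:
  assumes [measurable]: "g \<in> borel_measurable borel" and gB: "\<And>x. \<bar>g x\<bar> \<le> B"
  shows "integrable lborel (\<lambda>x. f x * g x)"
proof -
  have i: "integrable lborel (\<lambda>x. B * f x)" using f_int by simp
  have "norm (f x * g x) \<le> norm (B * f x)" for x
  proof -
    have "\<bar>f x * g x\<bar> = f x * \<bar>g x\<bar>" using f_nonneg[of x] by (simp add: abs_mult)
    also have "\<dots> \<le> f x * B" using gB[of x] f_nonneg[of x] by (intro mult_left_mono) auto
    finally show ?thesis by (simp add: mult.commute)
  qed
  then show ?thesis by (intro Bochner_Integration.integrable_bound[OF i]) auto
qed

end

context setting begin

lemma E4:
  fixes \<psi> :: "real \<times> real \<times> real \<times> real \<Rightarrow> ennreal"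
  assumes abcd: "a \<ge> 1" "b \<ge> 1" "c \<ge> 1" "d \<ge> 1" "distinct [a,b,c,d]"
    and \<psi>[measurable]: "\<psi> \<in> borel_measurable (borel \<Otimes>\<^sub>M borel \<Otimes>\<^sub>M borel \<Otimes>\<^sub>M borel)"
  shows "(\<integral>\<^sup>+\<omega>. \<psi> (X a \<omega>, X b \<omega>, X c \<omega>, X d \<omega>) \<partial>M) =
    (\<integral>\<^sup>+z. \<integral>\<^sup>+y. \<integral>\<^sup>+x. \<integral>\<^sup>+w. \<psi> (w, x, y, z) \<partial>Pf \<partial>Pf \<partial>Pf \<partial>Pf)"
proof -
  define I where "I = {a,b,c,d}"
  have I1: "i \<in> I \<Longrightarrow> i \<ge> 1" for i using abcd by (auto simp: I_def)
  have ind: "indep_vars (\<lambda>_. borel) X I"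
    using indep by (rule indep_vars_subset) (use I1 in auto)
  have rv: "i \<in> I \<Longrightarrow> random_variable borel (X i)" for i using I1 X_meas by auto
  have D: "distr M (\<Pi>\<^sub>M i\<in>I. borel) (\<lambda>\<omega>. \<lambda>i\<in>I. X i \<omega>) = (\<Pi>\<^sub>M i\<in>I. Pf)"
  proof -
    have "distr M (\<Pi>\<^sub>M i\<in>I. borel) (\<lambda>\<omega>. \<lambda>i\<in>I. X i \<omega>) = (\<Pi>\<^sub>M i\<in>I. distr M borel (X i))"
      using indep_vars_iff_distr_eq_PiM'[where I=I and M'="\<lambda>_. borel" and X=X] ind rv by (auto simp: I_def)
    also have "\<dots> = (\<Pi>\<^sub>M i\<in>I. Pf)"
      by (rule PiM_cong) (use distr_X_borel I1 in auto)
    finally show ?thesis .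
  qed
  interpret Pp: prob_space Pf by (rule Pf_prob)
  interpret PS: product_sigma_finite "\<lambda>_. Pf"
    by unfold_locales
  have ab: "a \<noteq> b" "a \<noteq> c" "a \<noteq> d" "b \<noteq> c" "b \<noteq> d" "c \<noteq> d" using abcd(5) by auto
  have "(\<integral>\<^sup>+\<omega>. \<psi> (X a \<omega>, X b \<omega>, X c \<omega>, X d \<omega>) \<partial>M) =
      (\<integral>\<^sup>+\<omega>. \<psi> ((\<lambda>i\<in>I. X i \<omega>) a, (\<lambda>i\<in>I. X i \<omega>) b, (\<lambda>i\<in>I. X i \<omega>) c, (\<lambda>i\<in>I. X i \<omega>) d) \<partial>M)"
    by (simp add: I_def)
  also have "\<dots> = (\<integral>\<^sup>+x. \<psi> (x a, x b, x c, x d) \<partial>distr M (\<Pi>\<^sub>M i\<in>I. borel) (\<lambda>\<omega>. \<lambda>i\<in>I. X i \<omega>))"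
    apply (rule nn_integral_distr[symmetric])
    subgoal using rv by (intro measurable_restrict) auto
    subgoal unfolding I_def by measurable
    done
  also have "\<dots> = (\<integral>\<^sup>+x. \<psi> (x a, x b, x c, x d) \<partial>(\<Pi>\<^sub>M i\<in>I. Pf))" by (simp add: D)
  also have "\<dots> = (\<integral>\<^sup>+x. \<integral>\<^sup>+w. \<psi> (w, x b, x c, x d) \<partial>Pf \<partial>(\<Pi>\<^sub>M i\<in>{b,c,d}. Pf))"
    unfolding I_def using ab
    by (subst PS.product_nn_integral_insert) auto
  also have "\<dots> = (\<integral>\<^sup>+x. \<integral>\<^sup>+y. \<integral>\<^sup>+w. \<psi> (w, y, x c, x d) \<partial>Pf \<partial>Pf \<partial>(\<Pi>\<^sub>M i\<in>{c,d}. Pf))"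
    using ab
    by (subst PS.product_nn_integral_insert) auto
  also have "\<dots> = (\<integral>\<^sup>+x. \<integral>\<^sup>+y. \<integral>\<^sup>+y'. \<integral>\<^sup>+w. \<psi> (w, y', y, x d) \<partial>Pf \<partial>Pf \<partial>Pf \<partial>(\<Pi>\<^sub>M i\<in>{d}. Pf))"
    using ab
    by (subst PS.product_nn_integral_insert) auto
  also have "\<dots> = (\<integral>\<^sup>+z. \<integral>\<^sup>+y. \<integral>\<^sup>+x. \<integral>\<^sup>+w. \<psi> (w, x, y, z) \<partial>Pf \<partial>Pf \<partial>Pf \<partial>Pf)"
    by (subst PS.product_nn_integral_singleton) auto
  finally show ?thesis .
qed

end

context setting begin

definition "Sf = (SOME S. S > 0 \<and> (\<forall>x. f x \<le> S))"
definition "KB = (SOME B. B > 0 \<and> (\<forall>x. K x \<le> B))"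

lemma Sf: "Sf > 0" "\<And>x. f x \<le> Sf"
proof -
  obtain S where "S > 0" "\<And>x. f x \<le> S" by (metis f_bound)
  then have "\<exists>S. S > 0 \<and> (\<forall>x. f x \<le> S)" by auto
  from someI_ex[OF this] show "Sf > 0" "\<And>x. f x \<le> Sf" unfolding Sf_def by auto
qed

lemma KB: "KB > 0" "\<And>x. K x \<le> KB"
proof -
  obtain S where "S > 0" "\<And>x. K x \<le> S" by (metis K_bound)
  then have "\<exists>S. S > 0 \<and> (\<forall>x. K x \<le> S)" by auto
  from someI_ex[OF this] show "KB > 0" "\<And>x. K x \<le> KB" unfolding KB_def by auto
qed

lemma f_abs_le: "\<bar>f x\<bar> \<le> Sf" using Sf f_nonneg[of x] by auto
lemma K_abs_le: "\<bar>K x\<bar> \<le> KB" using KB K_nonneg[of x] by auto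

lemma nn_Pf: "g \<in> borel_measurable borel \<Longrightarrow> (\<integral>\<^sup>+x. g x \<partial>Pf) = (\<integral>\<^sup>+x. ennreal (f x) * g x \<partial>lborel)"
  unfolding Pf_def by (subst nn_integral_density) auto

lemma nn_Pf_real:
  assumes [measurable]: "g \<in> borel_measurable borel" and "\<And>x. \<bar>g x\<bar> \<le> B" "\<And>x. g x \<ge> 0"
  shows "(\<integral>\<^sup>+x. ennreal (g x) \<partial>Pf) = ennreal (\<integral>x. f x * g x \<partial>lborel)"
proof -
  have "(\<integral>\<^sup>+x. ennreal (g x) \<partial>Pf) = (\<integral>\<^sup>+x. ennreal (f x * g x) \<partial>lborel)"
    using assms(3) by (subst nn_Pf) (auto simp: ennreal_mult f_nonneg)
  also have "\<dots> = ennreal (\<integral>x. f x * g x \<partial>lborel)"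
    using int_f_mult[OF assms(1,2)] assms(3) f_nonneg by (intro nn_integral_eq_integral) auto
  finally show ?thesis .
qed

lemma nn_Pf_const[simp]: "(\<integral>\<^sup>+x. c \<partial>Pf) = c"
proof -
  interpret Pp: prob_space Pf by (rule Pf_prob)
  have "emeasure Pf UNIV = 1" using Pp.emeasure_space_1 by simp
  then show ?thesis by simp
qed

lemma aff:
  assumes "h > 0"
  shows "(\<integral>y. f y * L ((x - y) / h) \<partial>lborel) = h * (\<integral>s. L s * f (x - h * s) \<partial>lborel)"
proof -
  have "(\<integral>y. f y * L ((x - y) / h) \<partial>lborel) =
    \<bar>- h\<bar> *\<^sub>R (\<integral>s. f (x + (- h) * s) * L ((x - (x + (- h) * s)) / h) \<partial>lborel)"
    using assms by (intro lborel_integral_real_affine) auto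
  also have "(\<lambda>s. f (x + (- h) * s) * L ((x - (x + (- h) * s)) / h)) = (\<lambda>s. L s * f (x - h * s))"
    using assms by (auto simp: fun_eq_iff)
  finally show ?thesis using assms by simp
qed

lemma aff_nn:
  assumes "h > 0" and [measurable]: "L \<in> borel_measurable borel"
  shows "(\<integral>\<^sup>+y. ennreal (f y) * L ((x - y) / h) \<partial>lborel) = h * (\<integral>\<^sup>+s. L s * ennreal (f (x - h * s)) \<partial>lborel)"
proof -
  have "(\<integral>\<^sup>+y. ennreal (f y) * L ((x - y) / h) \<partial>lborel) =
    ennreal \<bar>- h\<bar> * (\<integral>\<^sup>+s. ennreal (f (x + (- h) * s)) * L ((x - (x + (- h) * s)) / h) \<partial>lborel)"
    using assms by (intro nn_integral_real_affine) auto
  also have "(\<lambda>s. ennreal (f (x + (- h) * s)) * L ((x - (x + (- h) * s)) / h)) = (\<lambda>s. L s * ennreal (f (x - h * s)))"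
    using assms by (auto simp: fun_eq_iff mult.commute)
  finally show ?thesis using assms by simp
qed

lemma A_bound:
  assumes "integrable lborel L"
  shows "\<bar>\<integral>s. L s * f (x - h * s) \<partial>lborel\<bar> \<le> Sf * (\<integral>s. \<bar>L s\<bar> \<partial>lborel)"
proof -
  have m[measurable]: "L \<in> borel_measurable borel" using assms by auto
  have i: "integrable lborel (\<lambda>s. L s * f (x - h * s))"
  proof (rule Bochner_Integration.integrable_bound[where f="\<lambda>s. Sf * \<bar>L s\<bar>"])
    show "integrable lborel (\<lambda>s. Sf * \<bar>L s\<bar>)" using assms by auto
    have "\<And>s. (\<bar>L s\<bar>) * f (x - h * s) \<le> Sf * \<bar>L s\<bar>" using Sf(2) by (metis abs_ge_zero mult.commute mult_left_mono)
    then show "AE s in lborel. norm (L s * f (x - h * s)) \<le> norm (Sf * \<bar>L s\<bar>)"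
      using Sf f_nonneg by (auto simp: abs_mult)
  qed measurable
  have "\<bar>\<integral>s. L s * f (x - h * s) \<partial>lborel\<bar> \<le> (\<integral>s. \<bar>L s * f (x - h * s)\<bar> \<partial>lborel)"
    by (rule integral_abs_bound)
  also have "\<dots> \<le> (\<integral>s. Sf * \<bar>L s\<bar> \<partial>lborel)"
  proof (intro integral_mono)
    show "integrable lborel (\<lambda>s. \<bar>L s * f (x - h * s)\<bar>)" using i by auto
    show "integrable lborel (\<lambda>s. Sf * \<bar>L s\<bar>)" using assms by auto
    fix s show "\<bar>L s * f (x - h * s)\<bar> \<le> Sf * \<bar>L s\<bar>"
      using Sf(2)[of "x - h * s"] f_nonneg[of "x - h * s"] by (simp add: abs_mult) (metis abs_ge_zero mult.commute mult_left_mono)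
  qed
  finally show ?thesis by simp
qed

lemma A_lim:
  assumes "integrable lborel L" and h: "h \<longlonglongrightarrow> 0"
  shows "(\<lambda>n. \<integral>s. L s * f (x - h n * s) \<partial>lborel) \<longlonglongrightarrow> (\<integral>s. L s * f x \<partial>lborel)"
proof (rule integral_dominated_convergence[where w="\<lambda>s. Sf * \<bar>L s\<bar>"])
  have m[measurable]: "L \<in> borel_measurable borel" using assms by auto
  show "(\<lambda>s. L s * f x) \<in> borel_measurable lborel" by measurable
  show "(\<lambda>s. L s * f (x - h n * s)) \<in> borel_measurable lborel" for n by measurable
  show "integrable lborel (\<lambda>s. Sf * \<bar>L s\<bar>)" using assms by auto
  show "AE s in lborel. (\<lambda>n. L s * f (x - h n * s)) \<longlonglongrightarrow> L s * f x"
  proof (intro AE_I2 tendsto_mult tendsto_const)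
    fix s
    have "(\<lambda>n. x - h n * s) \<longlonglongrightarrow> x - 0 * s"
      by (intro tendsto_intros h)
    then have "(\<lambda>n. x - h n * s) \<longlonglongrightarrow> x" by simp
    moreover have "isCont f x" using f_cont continuous_on_eq_continuous_at by blast
    ultimately show "(\<lambda>n. f (x - h n * s)) \<longlonglongrightarrow> f x"
      using isCont_tendsto_compose by blast
  qed
  show "AE s in lborel. norm (L s * f (x - h n * s)) \<le> Sf * \<bar>L s\<bar>" for n
  proof -
    have "\<And>s. (\<bar>L s\<bar>) * f (x - h n * s) \<le> Sf * \<bar>L s\<bar>" using Sf(2) by (metis abs_ge_zero mult.commute mult_left_mono)
    then show ?thesis using f_nonneg by (auto simp: abs_mult)
  qed
qed

end

context setting begin

lemma emeasure_Pf_UNIV[simp]: "emeasure Pf UNIV = 1"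
proof -
  interpret Pp: prob_space Pf by (rule Pf_prob)
  show ?thesis using Pp.emeasure_space_1 by simp
qed

lemma int_fg_bounds:
  assumes [measurable]: "g \<in> borel_measurable borel" and "\<And>x. g x \<le> B" "\<And>x. 0 \<le> g x"
  shows "0 \<le> (\<integral>x. f x * g x \<partial>lborel)" "(\<integral>x. f x * g x \<partial>lborel) \<le> B"
proof -
  have gb: "\<bar>g x\<bar> \<le> B" for x using assms(2,3)[of x] by auto
  have i: "integrable lborel (\<lambda>x. f x * g x)" by (rule int_f_mult[OF assms(1) gb])
  show "0 \<le> (\<integral>x. f x * g x \<partial>lborel)" using assms(3) f_nonneg by (intro Bochner_Integration.integral_nonneg) auto
  have "(\<integral>x. f x * g x \<partial>lborel) \<le> (\<integral>x. B * f x \<partial>lborel)"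
  proof (intro integral_mono)
    show "integrable lborel (\<lambda>x. f x * g x)" by (rule i)
    show "integrable lborel (\<lambda>x. B * f x)" using f_int by auto
    fix x show "f x * g x \<le> B * f x" using assms(2)[of x] f_nonneg[of x] by (metis mult.commute mult_left_mono)
  qed
  also have "\<dots> = B" using f_one by simp
  finally show "(\<integral>x. f x * g x \<partial>lborel) \<le> B" .
qed

lemma E1:
  assumes [measurable]: "\<phi> \<in> borel_measurable borel"
  shows "(\<integral>\<omega>. \<phi> (X 1 \<omega>) \<partial>M) = (\<integral>x. f x * \<phi> x \<partial>lborel)"
proof -
  have "(\<integral>\<omega>. \<phi> (X 1 \<omega>) \<partial>M) = (\<integral>x. \<phi> x \<partial>distr M lborel (X 1))"
    by (subst integral_distr) auto
  also have "\<dots> = (\<integral>x. \<phi> x \<partial>Pf)" using distr_X[of 1] by simp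
  also have "\<dots> = (\<integral>x. f x * \<phi> x \<partial>lborel)"
    unfolding Pf_def by (subst integral_density) (auto simp: f_nonneg)
  finally show ?thesis .
qed

lemma E2:
  fixes L :: "real \<times> real \<Rightarrow> real"
  assumes [measurable]: "L \<in> borel_measurable (borel \<Otimes>\<^sub>M borel)"
    and Lnn: "\<And>p. 0 \<le> L p" and LB: "\<And>p. L p \<le> B"
  shows "(\<integral>\<omega>. L (X 1 \<omega>, X 2 \<omega>) \<partial>M) = (\<integral>x. f x * (\<integral>w. f w * L (w, x) \<partial>lborel) \<partial>lborel)"
proof -
  define J where "J x = (\<integral>w. f w * L (w, x) \<partial>lborel)" for x
  have J[measurable]: "J \<in> borel_measurable borel" unfolding J_def by measurable
  have Jb: "0 \<le> J x" "J x \<le> B" for x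
    unfolding J_def using int_fg_bounds[of "\<lambda>w. L (w, x)" B] Lnn LB by auto
  have "(\<integral>\<omega>. L (X 1 \<omega>, X 2 \<omega>) \<partial>M) = enn2real (\<integral>\<^sup>+\<omega>. ennreal (L (X 1 \<omega>, X 2 \<omega>)) \<partial>M)"
    using Lnn by (intro integral_eq_nn_integral) auto
  also have "(\<integral>\<^sup>+\<omega>. ennreal (L (X 1 \<omega>, X 2 \<omega>)) \<partial>M) =
     (\<integral>\<^sup>+z. \<integral>\<^sup>+y. \<integral>\<^sup>+x. \<integral>\<^sup>+w. ennreal (L (w, x)) \<partial>Pf \<partial>Pf \<partial>Pf \<partial>Pf)"
    using E4[of 1 2 3 4 "\<lambda>(w,x,y,z). ennreal (L (w, x))"] by (simp add: case_prod_beta')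
  also have "\<dots> = (\<integral>\<^sup>+z. \<integral>\<^sup>+y. \<integral>\<^sup>+x. ennreal (J x) \<partial>Pf \<partial>Pf \<partial>Pf)"
  proof -
    have "(\<integral>\<^sup>+w. ennreal (L (w, x)) \<partial>Pf) = ennreal (J x)" for x
      unfolding J_def using Lnn LB by (intro nn_Pf_real[where B=B]) (auto simp: abs_le_iff)
    then show ?thesis by simp
  qed
  also have "\<dots> = ennreal (\<integral>x. f x * J x \<partial>lborel)"
  proof -
    have "(\<integral>\<^sup>+x. ennreal (J x) \<partial>Pf) = ennreal (\<integral>x. f x * J x \<partial>lborel)"
      using Jb by (intro nn_Pf_real[where B=B]) (auto simp: abs_le_iff)
    then show ?thesis by simp
  qed
  finally show ?thesis
    using int_fg_bounds(1)[OF J Jb(2) Jb(1)] unfolding J_def by simp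
qed

lemma LimA:
  assumes Li: "integrable lborel L" and h: "h \<longlonglongrightarrow> 0"
  shows "(\<lambda>n. \<integral>x. f x * (\<integral>s. L s * f (x - h n * s) \<partial>lborel) \<partial>lborel)
     \<longlonglongrightarrow> (\<integral>s. L s \<partial>lborel) * (\<integral>x. f x ^ 2 \<partial>lborel)"
proof -
  have m[measurable]: "L \<in> borel_measurable borel" using Li by auto
  have "(\<lambda>n. \<integral>x. f x * (\<integral>s. L s * f (x - h n * s) \<partial>lborel) \<partial>lborel)
     \<longlonglongrightarrow> (\<integral>x. f x * (\<integral>s. L s * f x \<partial>lborel) \<partial>lborel)"
  proof (rule integral_dominated_convergence[where w="\<lambda>x. f x * (Sf * (\<integral>s. \<bar>L s\<bar> \<partial>lborel))"])
    show "(\<lambda>x. f x * (\<integral>s. L s * f x \<partial>lborel)) \<in> borel_measurable lborel" by measurable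
    show "(\<lambda>x. f x * (\<integral>s. L s * f (x - h n * s) \<partial>lborel)) \<in> borel_measurable lborel" for n
      by measurable
    show "integrable lborel (\<lambda>x. f x * (Sf * (\<integral>s. \<bar>L s\<bar> \<partial>lborel)))" using f_int by auto
    show "AE x in lborel. (\<lambda>n. f x * (\<integral>s. L s * f (x - h n * s) \<partial>lborel)) \<longlonglongrightarrow> f x * (\<integral>s. L s * f x \<partial>lborel)"
      by (intro AE_I2 tendsto_mult tendsto_const A_lim Li h)
    show "AE x in lborel. norm (f x * (\<integral>s. L s * f (x - h n * s) \<partial>lborel)) \<le> f x * (Sf * (\<integral>s. \<bar>L s\<bar> \<partial>lborel))" for n
      using A_bound[OF Li] f_nonneg by (auto simp: abs_mult intro!: mult_left_mono)
  qed
  also have "(\<integral>x. f x * (\<integral>s. L s * f x \<partial>lborel) \<partial>lborel) = (\<integral>s. L s \<partial>lborel) * (\<integral>x. f x ^ 2 \<partial>lborel)"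
  proof -
    have "(\<lambda>x. f x * (\<integral>s. L s * f x \<partial>lborel)) = (\<lambda>x. (\<integral>s. L s \<partial>lborel) * f x ^ 2)"
      by (auto simp: fun_eq_iff power2_eq_square)
    then show ?thesis by (simp only: integral_mult_right_zero)
  qed
  finally show ?thesis .
qed

lemma int_f2_pos: "(\<integral>x. f x ^ 2 \<partial>lborel) > 0"
proof -
  have i: "integrable lborel (\<lambda>x. f x ^ 2)"
    using int_f_mult[of f Sf] f_abs_le by (simp add: power2_eq_square)
  have "(\<integral>x. f x ^ 2 \<partial>lborel) \<noteq> 0"
  proof
    assume "(\<integral>x. f x ^ 2 \<partial>lborel) = 0"
    then have "AE x in lborel. f x ^ 2 = 0" using integral_nonneg_eq_0_iff_AE[OF i] by auto
    then have "AE x in lborel. f x = 0" by auto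
    then have "(\<integral>x. f x \<partial>lborel) = 0" by (rule integral_eq_zero_AE)
    then show False using f_one by simp
  qed
  moreover have "(\<integral>x. f x ^ 2 \<partial>lborel) \<ge> 0" by (intro Bochner_Integration.integral_nonneg) auto
  ultimately show ?thesis by linarith
qed

lemma int_Kpow_pos:
  assumes "j > 0"
  shows "(\<integral>x. K x ^ j \<partial>lborel) > 0" "integrable lborel (\<lambda>x. K x ^ j)"
proof -
  have i: "integrable lborel (\<lambda>x. K x ^ j)"
  proof (rule Bochner_Integration.integrable_bound[where f="\<lambda>x. KB ^ (j - 1) * K x"])
    show "integrable lborel (\<lambda>x. KB ^ (j - 1) * K x)" using K_int by auto
    show "AE x in lborel. norm (K x ^ j) \<le> norm (KB ^ (j - 1) * K x)"
    proof (intro AE_I2)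
      fix x
      have "K x ^ j = K x ^ (j - 1) * K x" using assms by (metis Suc_diff_1 power_Suc2)
      also have "\<dots> \<le> KB ^ (j - 1) * K x"
        using KB K_nonneg by (intro mult_right_mono power_mono) auto
      finally show "norm (K x ^ j) \<le> norm (KB ^ (j - 1) * K x)"
        using K_nonneg[of x] KB by auto
    qed
  qed measurable
  then show "integrable lborel (\<lambda>x. K x ^ j)" .
  have "(\<integral>x. K x ^ j \<partial>lborel) \<noteq> 0"
  proof
    assume "(\<integral>x. K x ^ j \<partial>lborel) = 0"
    then have "AE x in lborel. K x ^ j = 0" using integral_nonneg_eq_0_iff_AE[OF i] K_nonneg by auto
    then have "AE x in lborel. K x = 0" by auto
    then have "(\<integral>x. K x \<partial>lborel) = 0" by (rule integral_eq_zero_AE)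
    then show False using K_one by simp
  qed
  moreover have "(\<integral>x. K x ^ j \<partial>lborel) \<ge> 0" using K_nonneg by (intro Bochner_Integration.integral_nonneg) auto
  ultimately show "(\<integral>x. K x ^ j \<partial>lborel) > 0" by linarith
qed

end

lemma equiv_lim:
  fixes a p :: "nat \<Rightarrow> real"
  assumes "(\<lambda>n. a n / p n) \<longlonglongrightarrow> c" "c \<noteq> 0" "\<And>n. p n > 0"
  shows "a \<sim>[sequentially] (\<lambda>n. c * p n)"
proof (rule asymp_equivI')
  have "(\<lambda>n. (a n / p n) / c) \<longlonglongrightarrow> c / c" by (intro tendsto_intros assms)
  moreover have "(\<lambda>n. (a n / p n) / c) = (\<lambda>n. a n / (c * p n))" by (auto simp: fun_eq_iff)
  ultimately show "(\<lambda>n. a n / (c * p n)) \<longlonglongrightarrow> 1" using assms(2) by simp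
qed

lemma equiv_diff:
  fixes a b p :: "nat \<Rightarrow> real"
  assumes d: "(\<lambda>n. (a n - b n) / p n) \<longlonglongrightarrow> 0" and b: "(\<lambda>n. b n / p n) \<longlonglongrightarrow> c" "c \<noteq> 0"
    and p: "\<And>n. p n > 0"
  shows "a \<sim>[sequentially] b"
proof (rule asymp_equivI')
  have ev: "eventually (\<lambda>n. b n / p n \<noteq> 0) sequentially"
    using b tendsto_imp_eventually_ne by blast
  have "(\<lambda>n. ((a n - b n) / p n) / (b n / p n) + 1) \<longlonglongrightarrow> 0 / c + 1"
    by (intro tendsto_intros d b)
  then have "(\<lambda>n. ((a n - b n) / p n) / (b n / p n) + 1) \<longlonglongrightarrow> 1" by simp
  moreover have "eventually (\<lambda>n. ((a n - b n) / p n) / (b n / p n) + 1 = a n / b n) sequentially"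
    using ev
  proof (rule eventually_mono)
    fix n assume "b n / p n \<noteq> 0"
    then have "b n \<noteq> 0" "p n \<noteq> 0" by auto
    then show "((a n - b n) / p n) / (b n / p n) + 1 = a n / b n" by (simp add: field_simps)
  qed
  ultimately show "(\<lambda>n. a n / b n) \<longlonglongrightarrow> 1" using tendsto_cong by fastforce
qed

context setting begin

lemma EKj:
  assumes h: "h > 0"
  shows "(\<integral>\<omega>. K ((X 1 \<omega> - X 2 \<omega>) / h) ^ j \<partial>M) = h * (\<integral>x. f x * (\<integral>s. K s ^ j * f (x - h * s) \<partial>lborel) \<partial>lborel)"
proof -
  have mL: "(\<lambda>p. K ((fst p - snd p) / h) ^ j) \<in> borel_measurable (borel \<Otimes>\<^sub>M borel)" by measurable
  have nL: "\<And>p. 0 \<le> K ((fst p - snd p) / h) ^ j" using K_nonneg by auto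
  have bL: "\<And>p. K ((fst p - snd p) / h) ^ j \<le> KB ^ j" using K_nonneg KB by (auto intro: power_mono)
  have "(\<integral>\<omega>. K ((X 1 \<omega> - X 2 \<omega>) / h) ^ j \<partial>M)
      = (\<integral>x. f x * (\<integral>w. f w * K ((w - x) / h) ^ j \<partial>lborel) \<partial>lborel)"
    using E2[OF mL nL bL] by simp
  also have "\<dots> = (\<integral>x. f x * (h * (\<integral>s. K s ^ j * f (x - h * s) \<partial>lborel)) \<partial>lborel)"
  proof -
    have "(\<integral>w. f w * K ((w - x) / h) ^ j \<partial>lborel) = (\<integral>w. f w * K ((x - w) / h) ^ j \<partial>lborel)" for x
    proof -
      have "K ((w - x) / h) = K ((x - w) / h)" for w
        using K_sym[of "(x - w) / h"] by (simp add: minus_divide_left)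
      then show ?thesis by simp
    qed
    also have "\<dots> x = h * (\<integral>s. K s ^ j * f (x - h * s) \<partial>lborel)" for x
      using aff[OF h, of "\<lambda>z. K z ^ j" x] by simp
    finally show ?thesis by simp
  qed
  also have "\<dots> = h * (\<integral>x. f x * (\<integral>s. K s ^ j * f (x - h * s) \<partial>lborel) \<partial>lborel)"
    by (simp add: mult.left_commute)
  finally show ?thesis .
qed

lemma EKj_lim:
  assumes "j > 0" and h: "\<And>n. h n > 0" "h \<longlonglongrightarrow> 0"
  shows "(\<lambda>n. (\<integral>\<omega>. K ((X 1 \<omega> - X 2 \<omega>) / h n) ^ j \<partial>M) / h n)
     \<longlonglongrightarrow> (\<integral>s. K s ^ j \<partial>lborel) * (\<integral>x. f x ^ 2 \<partial>lborel)"
proof -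
  have "(\<lambda>n. (\<integral>\<omega>. K ((X 1 \<omega> - X 2 \<omega>) / h n) ^ j \<partial>M) / h n) =
    (\<lambda>n. \<integral>x. f x * (\<integral>s. K s ^ j * f (x - h n * s) \<partial>lborel) \<partial>lborel)"
  proof
    fix n show "(\<integral>\<omega>. K ((X 1 \<omega> - X 2 \<omega>) / h n) ^ j \<partial>M) / h n =
      (\<integral>x. f x * (\<integral>s. K s ^ j * f (x - h n * s) \<partial>lborel) \<partial>lborel)"
      using h(1)[of n] by (subst EKj[OF h(1)]) simp
  qed
  also have "\<dots> \<longlonglongrightarrow> (\<integral>s. K s ^ j \<partial>lborel) * (\<integral>x. f x ^ 2 \<partial>lborel)"
    by (rule LimA[OF int_Kpow_pos(2)[OF assms(1)] h(2)])
  finally show ?thesis .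
qed

lemma EKj_equiv:
  assumes "j > 0" and h: "\<And>n. h n > 0" "h \<longlonglongrightarrow> 0"
  shows "(\<lambda>n. \<integral>\<omega>. K ((X 1 \<omega> - X 2 \<omega>) / h n) ^ j \<partial>M) \<sim>[sequentially]
     (\<lambda>n. ((\<integral>s. K s ^ j \<partial>lborel) * (\<integral>x. f x ^ 2 \<partial>lborel)) * h n)"
  using int_Kpow_pos(1)[OF assms(1)] int_f2_pos
  by (intro equiv_lim EKj_lim assms) auto

lemma A_K_bounds:
  assumes "h > 0"
  shows "0 \<le> (\<integral>s. K s * f (x - h * s) \<partial>lborel)" "(\<integral>s. K s * f (x - h * s) \<partial>lborel) \<le> Sf"
proof -
  show "0 \<le> (\<integral>s. K s * f (x - h * s) \<partial>lborel)"
    using K_nonneg f_nonneg by (intro Bochner_Integration.integral_nonneg) auto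
  have "\<bar>\<integral>s. K s * f (x - h * s) \<partial>lborel\<bar> \<le> Sf * (\<integral>s. \<bar>K s\<bar> \<partial>lborel)"
    by (rule A_bound[OF K_int])
  then show "(\<integral>s. K s * f (x - h * s) \<partial>lborel) \<le> Sf" using K_one K_nonneg by simp
qed

lemma EK_eq: "h > 0 \<Longrightarrow> EK M X K h = h * (\<integral>x. f x * (\<integral>s. K s * f (x - h * s) \<partial>lborel) \<partial>lborel)"
  unfolding EK_def using EKj[of h 1] by simp

lemma EK_bounds:
  assumes "h > 0"
  shows "0 \<le> EK M X K h" "EK M X K h \<le> h * Sf"
proof -
  note b = int_fg_bounds[of "\<lambda>x. \<integral>s. K s * f (x - h * s) \<partial>lborel" Sf, OF _ A_K_bounds(2)[OF assms] A_K_bounds(1)[OF assms]]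
  show "0 \<le> EK M X K h" using b(1) assms by (simp add: EK_eq)
  show "EK M X K h \<le> h * Sf" using b(2) assms by (simp add: EK_eq)
qed

end

context setting begin

definition "Ah h x = (\<integral>s. K s * f (x - h * s) \<partial>lborel)"

lemma Ah_meas[measurable]: "Ah h \<in> borel_measurable borel"
  unfolding Ah_def by measurable

lemma Ah_bounds: "h > 0 \<Longrightarrow> 0 \<le> Ah h x" "h > 0 \<Longrightarrow> Ah h x \<le> Sf"
  unfolding Ah_def using A_K_bounds by auto

lemma g1n_eq:
  assumes h: "h > 0"
  shows "g1n M X K f h x = h * Ah h x - EK M X K h"
proof -
  have i1: "integrable lborel (\<lambda>y. f y * K ((x - y) / h))"
    using K_abs_le by (intro int_f_mult[where B=KB]) auto
  have "g1n M X K f h x = (\<integral>y. f y * K ((x - y) / h) - EK M X K h * f y \<partial>lborel)"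
    unfolding g1n_def gn_def by (rule Bochner_Integration.integral_cong) (auto simp: algebra_simps)
  also have "\<dots> = (\<integral>y. f y * K ((x - y) / h) \<partial>lborel) - (\<integral>y. EK M X K h * f y \<partial>lborel)"
    using i1 f_int by (intro Bochner_Integration.integral_diff) auto
  also have "\<dots> = h * Ah h x - EK M X K h"
    using aff[OF h, of K x] f_one unfolding Ah_def by simp
  finally show ?thesis .
qed

lemma g1n_meas[measurable]: "h > 0 \<Longrightarrow> g1n M X K f h \<in> borel_measurable borel"
proof -
  assume h: "h > 0"
  have "g1n M X K f h = (\<lambda>x. h * Ah h x - EK M X K h)" using g1n_eq[OF h] by auto
  then show ?thesis by simp
qed

lemma g1n_bound: "h > 0 \<Longrightarrow> \<bar>g1n M X K f h x\<bar> \<le> h * Sf"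
proof -
  assume h: "h > 0"
  have "0 \<le> h * Ah h x" "h * Ah h x \<le> h * Sf" using Ah_bounds[OF h, of x] h by auto
  then show ?thesis using g1n_eq[OF h] EK_bounds[OF h] by auto
qed

lemma g2n_meas[measurable]:
  "h > 0 \<Longrightarrow> (\<lambda>p. g2n M X K f h (fst p) (snd p)) \<in> borel_measurable (borel \<Otimes>\<^sub>M borel)"
  unfolding g2n_def gn_def by measurable

lemma g2n_close: "h > 0 \<Longrightarrow> \<bar>g2n M X K f h x y - K ((x - y) / h)\<bar> \<le> 3 * h * Sf"
proof -
  assume h: "h > 0"
  have "\<bar>g2n M X K f h x y - K ((x - y) / h)\<bar> \<le> \<bar>EK M X K h\<bar> + \<bar>g1n M X K f h x\<bar> + \<bar>g1n M X K f h y\<bar>"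
    unfolding g2n_def gn_def by linarith
  also have "\<dots> \<le> h * Sf + h * Sf + h * Sf"
    using EK_bounds[OF h] g1n_bound[OF h] by (intro add_mono) auto
  finally show ?thesis by simp
qed

end

lemma AE_lborel_interval_ex:
  fixes a b :: real
  assumes "AE x in lborel. P x" "a < b"
  shows "\<exists>x\<in>{a<..<b}. P x"
proof (rule ccontr)
  assume "\<not> ?thesis"
  then have sub: "{a<..<b} \<subseteq> {x. \<not> P x}" by auto
  from assms(1) obtain N where N: "{x \<in> space lborel. \<not> P x} \<subseteq> N" "N \<in> sets lborel" "emeasure lborel N = 0"
    by (auto elim!: AE_E)
  have "emeasure lborel {a<..<b} \<le> emeasure lborel N"
    using sub N by (intro emeasure_mono) auto
  then show False using N assms(2) by simp
qed

lemma cont_AE_zero: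
  fixes g :: "real \<Rightarrow> real"
  assumes "continuous_on UNIV g" "AE x in lborel. g x = 0"
  shows "g x = 0"
proof (rule ccontr)
  assume ne: "g x \<noteq> 0"
  have "isCont g x" using assms(1) continuous_on_eq_continuous_at by blast
  then obtain d where d: "d > 0" "\<And>y. dist y x < d \<Longrightarrow> dist (g y) (g x) < \<bar>g x\<bar>"
    using ne unfolding continuous_at_eps_delta by (metis zero_less_abs_iff)
  obtain y where y: "y \<in> {x - d<..<x + d}" "g y = 0"
    using AE_lborel_interval_ex[OF assms(2), of "x - d" "x + d"] d by auto
  have "dist y x < d" using y by (auto simp: dist_real_def)
  then show False using d(2)[of y] y by (simp add: dist_real_def)
qed

context setting begin

definition "mf = (\<integral>x. f x ^ 2 \<partial>lborel)"

lemma d1_pos: "(\<integral>x. (f x - mf)\<^sup>2 * f x \<partial>lborel) > 0"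
proof -
  define g where "g x = (f x - mf)\<^sup>2 * f x" for x
  have gc: "continuous_on UNIV g" unfolding g_def using f_cont by (intro continuous_intros)
  have gm[measurable]: "g \<in> borel_measurable borel" by (rule borel_measurable_continuous_onI[OF gc])
  have gnn: "0 \<le> g x" for x unfolding g_def using f_nonneg by auto
  have gi: "integrable lborel g"
  proof -
    have "integrable lborel (\<lambda>x. f x * (f x - mf)\<^sup>2)"
    proof (rule int_f_mult[where B="(Sf + \<bar>mf\<bar>)\<^sup>2"])
      fix x
      have a: "\<bar>f x - mf\<bar> \<le> Sf + \<bar>mf\<bar>" using f_abs_le[of x] abs_triangle_ineq4[of "f x" mf] by linarith
      have "\<bar>f x - mf\<bar>^2 \<le> (Sf + \<bar>mf\<bar>)\<^sup>2" by (rule power_mono[OF a abs_ge_zero])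
      then show "\<bar>(f x - mf)\<^sup>2\<bar> \<le> (Sf + \<bar>mf\<bar>)\<^sup>2" by (simp only: power_abs abs_power2)
    qed (intro borel_measurable_continuous_onI continuous_intros f_cont)
    then show ?thesis unfolding g_def by (simp add: mult.commute)
  qed
  have "(\<integral>x. g x \<partial>lborel) \<noteq> 0"
  proof
    assume "(\<integral>x. g x \<partial>lborel) = 0"
    then have "AE x in lborel. g x = 0" using integral_nonneg_eq_0_iff_AE[OF gi AE_I2[OF gnn]] by simp
    then have g0: "g x = 0" for x by (rule cont_AE_zero[OF gc])
    have "f x \<in> {0, mf}" for x using g0[of x] unfolding g_def by auto
    then have "f ` UNIV \<subseteq> {0, mf}" by auto
    then have "finite (f ` UNIV)" by (rule finite_subset) auto
    then have "f constant_on UNIV" using continuous_finite_range_constant[OF connected_UNIV f_cont] by simp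
    then obtain c where c: "\<And>x. f x = c" by (auto simp: constant_on_def)
    have fe: "f = (\<lambda>_. c)" by (rule ext) (rule c)
    have "integrable lborel (\<lambda>_::real. c)" using f_int unfolding fe .
    then have "c = 0" by (auto simp: integrable_iff_bounded ennreal_mult_less_top)
    then show False using f_one c by simp
  qed
  moreover have "(\<integral>x. g x \<partial>lborel) \<ge> 0" using gnn by (intro Bochner_Integration.integral_nonneg) auto
  ultimately show ?thesis unfolding g_def by linarith
qed

end

context setting begin

lemma EK_over_h_lim:
  assumes h: "\<And>n. h n > 0" "h \<longlonglongrightarrow> 0"
  shows "(\<lambda>n. EK M X K (h n) / h n) \<longlonglongrightarrow> mf"
proof -
  have "(\<lambda>n. EK M X K (h n) / h n) = (\<lambda>n. \<integral>x. f x * (\<integral>s. K s * f (x - h n * s) \<partial>lborel) \<partial>lborel)"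
  proof (rule ext)
    fix n show "EK M X K (h n) / h n = (\<integral>x. f x * (\<integral>s. K s * f (x - h n * s) \<partial>lborel) \<partial>lborel)"
      using EK_eq[OF h(1)[of n]] h(1)[of n] by simp
  qed
  also have "\<dots> \<longlonglongrightarrow> (\<integral>s. K s \<partial>lborel) * (\<integral>x. f x ^ 2 \<partial>lborel)"
    by (rule LimA[OF K_int h(2)])
  finally show ?thesis using K_one by (simp add: mf_def)
qed

lemma Ah_lim:
  assumes h: "h \<longlonglongrightarrow> 0"
  shows "(\<lambda>n. Ah (h n) x) \<longlonglongrightarrow> f x"
  using A_lim[OF K_int h, of x] K_one unfolding Ah_def by simp

lemma part6_lim:
  assumes h: "\<And>n. h n > 0" "h \<longlonglongrightarrow> 0"
  shows "(\<lambda>n. (\<integral>\<omega>. (g1n M X K f (h n) (X 1 \<omega>))\<^sup>2 \<partial>M) / (h n)\<^sup>2)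
      \<longlonglongrightarrow> (\<integral>x. (f x - mf)\<^sup>2 * f x \<partial>lborel)"
proof -
  define e where "e n = EK M X K (h n) / h n" for n
  have e_lim: "e \<longlonglongrightarrow> mf" unfolding e_def by (rule EK_over_h_lim[OF h])
  have eb: "0 \<le> e n" "e n \<le> Sf" for n
    using EK_bounds[OF h(1)[of n]] h(1)[of n] unfolding e_def by (auto simp: field_simps)
  have eq: "(\<integral>\<omega>. (g1n M X K f (h n) (X 1 \<omega>))\<^sup>2 \<partial>M) / (h n)\<^sup>2 =
      (\<integral>x. f x * (Ah (h n) x - e n)\<^sup>2 \<partial>lborel)" for n
  proof -
    have hn: "h n > 0" by (rule h(1))
    have "(\<integral>\<omega>. (g1n M X K f (h n) (X 1 \<omega>))\<^sup>2 \<partial>M) = (\<integral>x. f x * (g1n M X K f (h n) x)\<^sup>2 \<partial>lborel)"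
      using hn by (intro E1) measurable
    also have "\<dots> = (\<integral>x. (h n)\<^sup>2 * (f x * (Ah (h n) x - e n)\<^sup>2) \<partial>lborel)"
    proof (rule Bochner_Integration.integral_cong[OF refl])
      fix x
      have "g1n M X K f (h n) x = h n * (Ah (h n) x - e n)"
        using g1n_eq[OF hn, of x] hn unfolding e_def by (simp add: right_diff_distrib)
      then show "f x * (g1n M X K f (h n) x)\<^sup>2 = (h n)\<^sup>2 * (f x * (Ah (h n) x - e n)\<^sup>2)"
        by (simp add: power_mult_distrib)
    qed
    also have "\<dots> = (h n)\<^sup>2 * (\<integral>x. f x * (Ah (h n) x - e n)\<^sup>2 \<partial>lborel)" by simp
    finally show ?thesis using hn by simp
  qed
  have "(\<lambda>n. \<integral>x. f x * (Ah (h n) x - e n)\<^sup>2 \<partial>lborel) \<longlonglongrightarrow> (\<integral>x. f x * (f x - mf)\<^sup>2 \<partial>lborel)"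
  proof (rule integral_dominated_convergence[where w="\<lambda>x. Sf\<^sup>2 * f x"])
    show "(\<lambda>x. f x * (f x - mf)\<^sup>2) \<in> borel_measurable lborel" by measurable
    show "(\<lambda>x. f x * (Ah (h n) x - e n)\<^sup>2) \<in> borel_measurable lborel" for n by measurable
    show "integrable lborel (\<lambda>x. Sf\<^sup>2 * f x)" using f_int by auto
    show "AE x in lborel. (\<lambda>n. f x * (Ah (h n) x - e n)\<^sup>2) \<longlonglongrightarrow> f x * (f x - mf)\<^sup>2"
      by (intro AE_I2 tendsto_intros Ah_lim h e_lim)
    show "AE x in lborel. norm (f x * (Ah (h n) x - e n)\<^sup>2) \<le> Sf\<^sup>2 * f x" for n
    proof (intro AE_I2)
      fix x
      have "\<bar>Ah (h n) x - e n\<bar> \<le> Sf" using Ah_bounds[OF h(1), of n x] eb[of n] by (auto simp: abs_le_iff)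
      then have "\<bar>Ah (h n) x - e n\<bar>^2 \<le> Sf^2" by (intro power_mono) auto
      then have "(Ah (h n) x - e n)\<^sup>2 \<le> Sf^2" by simp
      then show "norm (f x * (Ah (h n) x - e n)\<^sup>2) \<le> Sf\<^sup>2 * f x"
        using f_nonneg[of x] by (simp add: abs_mult mult.commute mult_left_mono)
    qed
  qed
  then show ?thesis unfolding eq by (simp add: mult.commute)
qed

lemma part6:
  assumes h: "\<And>n. h n > 0" "h \<longlonglongrightarrow> 0"
  shows "(\<lambda>n. \<integral>\<omega>. (g1n M X K f (h n) (X 1 \<omega>))\<^sup>2 \<partial>M) \<sim>[sequentially]
     (\<lambda>n. (\<integral>x. (f x - (\<integral>y. f y ^ 2 \<partial>lborel))\<^sup>2 * f x \<partial>lborel) * (h n)\<^sup>2)"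
proof -
  have "(h n)\<^sup>2 > 0" for n using h(1)[of n] by simp
  then show ?thesis using part6_lim[OF h] d1_pos unfolding mf_def
    by (intro equiv_lim) auto
qed

end

lemma sq_close:
  fixes a b r :: real
  assumes "\<bar>a - b\<bar> \<le> r" "0 \<le> b"
  shows "\<bar>a\<^sup>2 - b\<^sup>2\<bar> \<le> r * (2 * b + r)"
proof -
  have "\<bar>a\<^sup>2 - b\<^sup>2\<bar> = \<bar>a - b\<bar> * \<bar>a + b\<bar>" by (simp add: power2_eq_square abs_mult[symmetric] algebra_simps)
  also have "\<bar>a + b\<bar> \<le> 2 * b + r" using assms by (simp add: abs_le_iff)
  then have "\<bar>a - b\<bar> * \<bar>a + b\<bar> \<le> r * (2 * b + r)" using assms by (intro mult_mono) auto
  finally show ?thesis .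
qed

lemma four_close:
  fixes a b r B :: real
  assumes "\<bar>a - b\<bar> \<le> r" "0 \<le> b" "b \<le> B" "0 \<le> r"
  shows "\<bar>a ^ 4 - b ^ 4\<bar> \<le> 4 * r * (B + r)\<^sup>2 * (b + r)"
proof -
  have ab: "\<bar>a\<bar> \<le> b + r" using assms by (simp add: abs_le_iff)
  have e: "a ^ 4 - b ^ 4 = (a - b) * ((a + b) * (a\<^sup>2 + b\<^sup>2))" by (simp add: algebra_simps power2_eq_square power4_eq_xxxx)
  have s1: "\<bar>a + b\<bar> \<le> 2 * (b + r)" using assms by (simp add: abs_le_iff)
  have s2: "a\<^sup>2 + b\<^sup>2 \<le> 2 * (B + r) * (b + r)"
  proof -
    have "a\<^sup>2 = \<bar>a\<bar>^2" by simp
    also have "\<dots> \<le> (b + r)^2" using ab by (intro power_mono) auto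
    finally have "a\<^sup>2 \<le> (b + r)^2" .
    moreover have "b\<^sup>2 \<le> (b + r)^2" using assms by (intro power_mono) auto
    moreover have "(b + r)^2 \<le> (B + r) * (b + r)" using assms by (simp add: power2_eq_square mult_right_mono)
    ultimately show ?thesis by linarith
  qed
  have "\<bar>a ^ 4 - b ^ 4\<bar> = \<bar>a - b\<bar> * (\<bar>a + b\<bar> * (a\<^sup>2 + b\<^sup>2))"
    unfolding e by (simp add: abs_mult)
  also have "\<dots> \<le> r * ((2 * (b + r)) * (2 * (B + r) * (b + r)))"
    using assms s1 s2 by (intro mult_mono) auto
  also have "\<dots> = (4 * r * (B + r) * (b + r)) * (b + r)" by (simp add: algebra_simps)
  also have "\<dots> \<le> (4 * r * (B + r) * (b + r)) * (B + r)"
    using assms by (intro mult_left_mono) auto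
  also have "\<dots> = 4 * r * (B + r)\<^sup>2 * (b + r)" by (simp add: power2_eq_square algebra_simps)
  finally show ?thesis .
qed

context setting begin

lemma intM: "\<phi> \<in> borel_measurable M \<Longrightarrow> (\<And>\<omega>. \<bar>\<phi> \<omega>\<bar> \<le> (B::real)) \<Longrightarrow> integrable M \<phi>"
  by (rule integrable_const_bound[where B=B]) auto

lemma g2n_X_meas[measurable]:
  "h > 0 \<Longrightarrow> i \<ge> 1 \<Longrightarrow> j \<ge> 1 \<Longrightarrow> (\<lambda>\<omega>. g2n M X K f h (X i \<omega>) (X j \<omega>)) \<in> borel_measurable M"
  using measurable_compose[OF measurable_Pair[OF X_meas[of i] X_meas[of j]] g2n_meas[of h]] by simp

lemma K_X_meas[measurable]:
  "i \<ge> 1 \<Longrightarrow> j \<ge> 1 \<Longrightarrow> (\<lambda>\<omega>. K ((X i \<omega> - X j \<omega>) / h)) \<in> borel_measurable M"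
  by measurable

lemma g2n_abs: "h > 0 \<Longrightarrow> \<bar>g2n M X K f h x y\<bar> \<le> KB + 3 * h * Sf"
  using g2n_close[of h x y] KB(2)[of "(x - y) / h"] K_nonneg[of "(x - y) / h"] by (auto simp: abs_le_iff)

lemma part2_diff:
  assumes h: "h > 0"
  shows "\<bar>(\<integral>\<omega>. (g2n M X K f h (X 1 \<omega>) (X 2 \<omega>))\<^sup>2 \<partial>M) - (\<integral>\<omega>. (K ((X 1 \<omega> - X 2 \<omega>) / h))\<^sup>2 \<partial>M)\<bar>
     \<le> 15 * h\<^sup>2 * Sf\<^sup>2"
proof -
  define a where "a \<omega> = g2n M X K f h (X 1 \<omega>) (X 2 \<omega>)" for \<omega>
  define b where "b \<omega> = K ((X 1 \<omega> - X 2 \<omega>) / h)" for \<omega>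
  define r where "r = 3 * h * Sf"
  have am[measurable]: "a \<in> borel_measurable M" unfolding a_def using h by measurable
  have bm[measurable]: "b \<in> borel_measurable M" unfolding b_def by measurable
  have ab: "\<bar>a \<omega> - b \<omega>\<bar> \<le> r" for \<omega> unfolding a_def b_def r_def by (rule g2n_close[OF h])
  have bnn: "0 \<le> b \<omega>" for \<omega> unfolding b_def by (rule K_nonneg)
  have bB: "b \<omega> \<le> KB" for \<omega> unfolding b_def by (rule KB)
  have aB: "\<bar>a \<omega>\<bar> \<le> KB + r" for \<omega> unfolding a_def r_def by (rule g2n_abs[OF h])
  have r0: "0 \<le> r" unfolding r_def using h Sf by auto
  have ia: "integrable M (\<lambda>\<omega>. (a \<omega>)\<^sup>2)"
  proof (rule intM[where B="(KB + r)\<^sup>2"])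
    fix \<omega> have "\<bar>a \<omega>\<bar>^2 \<le> (KB + r)\<^sup>2" using aB by (intro power_mono) auto
    then show "\<bar>(a \<omega>)\<^sup>2\<bar> \<le> (KB + r)\<^sup>2" by simp
  qed measurable
  have ib: "integrable M (\<lambda>\<omega>. (b \<omega>)\<^sup>2)"
  proof (rule intM[where B="KB\<^sup>2"])
    fix \<omega> show "\<bar>(b \<omega>)\<^sup>2\<bar> \<le> KB\<^sup>2" using bnn[of \<omega>] bB[of \<omega>] by (simp add: power_mono)
  qed measurable
  have ib1: "integrable M b" using bnn bB by (intro intM[where B=KB]) auto
  have "\<bar>(\<integral>\<omega>. (a \<omega>)\<^sup>2 \<partial>M) - (\<integral>\<omega>. (b \<omega>)\<^sup>2 \<partial>M)\<bar> = \<bar>\<integral>\<omega>. (a \<omega>)\<^sup>2 - (b \<omega>)\<^sup>2 \<partial>M\<bar>"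
    using ia ib by simp
  also have "\<dots> \<le> (\<integral>\<omega>. \<bar>(a \<omega>)\<^sup>2 - (b \<omega>)\<^sup>2\<bar> \<partial>M)" by (rule integral_abs_bound)
  also have "\<dots> \<le> (\<integral>\<omega>. r * (2 * b \<omega> + r) \<partial>M)"
    using ia ib ib1 sq_close[OF ab bnn] by (intro integral_mono) auto
  also have "\<dots> = r * (2 * (\<integral>\<omega>. b \<omega> \<partial>M) + r)"
    using ib1 by (simp add: prob_space)
  also have "\<dots> \<le> r * (2 * (h * Sf) + r)"
  proof -
    have "(\<integral>\<omega>. b \<omega> \<partial>M) = EK M X K h" unfolding b_def EK_def ..
    then have "(\<integral>\<omega>. b \<omega> \<partial>M) \<le> h * Sf" using EK_bounds[OF h] by simp
    then show ?thesis using r0 by (intro mult_left_mono) auto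
  qed
  also have "\<dots> = 15 * h\<^sup>2 * Sf\<^sup>2" unfolding r_def by (simp add: power2_eq_square algebra_simps)
  finally show ?thesis unfolding a_def b_def .
qed

lemma part4_diff:
  assumes h: "h > 0"
  shows "\<bar>(\<integral>\<omega>. (g2n M X K f h (X 1 \<omega>) (X 2 \<omega>))^ 4 \<partial>M) - (\<integral>\<omega>. (K ((X 1 \<omega> - X 2 \<omega>) / h))^ 4 \<partial>M)\<bar>
     \<le> 48 * h\<^sup>2 * Sf\<^sup>2 * (KB + 3 * h * Sf)\<^sup>2"
proof -
  define a where "a \<omega> = g2n M X K f h (X 1 \<omega>) (X 2 \<omega>)" for \<omega>
  define b where "b \<omega> = K ((X 1 \<omega> - X 2 \<omega>) / h)" for \<omega>
  define r where "r = 3 * h * Sf"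
  have am[measurable]: "a \<in> borel_measurable M" unfolding a_def using h by measurable
  have bm[measurable]: "b \<in> borel_measurable M" unfolding b_def by measurable
  have ab: "\<bar>a \<omega> - b \<omega>\<bar> \<le> r" for \<omega> unfolding a_def b_def r_def by (rule g2n_close[OF h])
  have bnn: "0 \<le> b \<omega>" for \<omega> unfolding b_def by (rule K_nonneg)
  have bB: "b \<omega> \<le> KB" for \<omega> unfolding b_def by (rule KB)
  have aB: "\<bar>a \<omega>\<bar> \<le> KB + r" for \<omega> unfolding a_def r_def by (rule g2n_abs[OF h])
  have r0: "0 \<le> r" unfolding r_def using h Sf by auto
  have ia: "integrable M (\<lambda>\<omega>. (a \<omega>) ^ 4)"
  proof (rule intM[where B="(KB + r) ^ 4"])
    fix \<omega> have "\<bar>a \<omega>\<bar>^4 \<le> (KB + r) ^ 4" using aB by (intro power_mono) auto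
    then show "\<bar>(a \<omega>) ^ 4\<bar> \<le> (KB + r) ^ 4" by (simp add: power_abs)
  qed measurable
  have ib: "integrable M (\<lambda>\<omega>. (b \<omega>) ^ 4)"
  proof (rule intM[where B="KB ^ 4"])
    fix \<omega> show "\<bar>(b \<omega>) ^ 4\<bar> \<le> KB ^ 4" using bnn[of \<omega>] bB[of \<omega>] by (simp add: power_mono)
  qed measurable
  have ib1: "integrable M b" using bnn bB by (intro intM[where B=KB]) auto
  have "\<bar>(\<integral>\<omega>. (a \<omega>) ^ 4 \<partial>M) - (\<integral>\<omega>. (b \<omega>) ^ 4 \<partial>M)\<bar> = \<bar>\<integral>\<omega>. (a \<omega>) ^ 4 - (b \<omega>) ^ 4 \<partial>M\<bar>"
    using ia ib by simp
  also have "\<dots> \<le> (\<integral>\<omega>. \<bar>(a \<omega>) ^ 4 - (b \<omega>) ^ 4\<bar> \<partial>M)" by (rule integral_abs_bound)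
  also have "\<dots> \<le> (\<integral>\<omega>. 4 * r * (KB + r)\<^sup>2 * (b \<omega> + r) \<partial>M)"
    using ia ib ib1 four_close[OF ab bnn bB r0] by (intro integral_mono) auto
  also have "\<dots> = 4 * r * (KB + r)\<^sup>2 * ((\<integral>\<omega>. b \<omega> \<partial>M) + r)"
    using ib1 by (simp add: prob_space)
  also have "\<dots> \<le> 4 * r * (KB + r)\<^sup>2 * ((h * Sf) + r)"
  proof -
    have "(\<integral>\<omega>. b \<omega> \<partial>M) = EK M X K h" unfolding b_def EK_def ..
    then have "(\<integral>\<omega>. b \<omega> \<partial>M) \<le> h * Sf" using EK_bounds[OF h] by simp
    then show ?thesis using r0 by (intro mult_left_mono) auto
  qed
  also have "\<dots> = 48 * h\<^sup>2 * Sf\<^sup>2 * (KB + 3 * h * Sf)\<^sup>2" unfolding r_def by (simp add: power2_eq_square algebra_simps)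
  finally show ?thesis unfolding a_def b_def .
qed

end

context setting begin

lemma part2:
  assumes h: "\<And>n. h n > 0" "h \<longlonglongrightarrow> 0"
  shows "(\<lambda>n. \<integral>\<omega>. (g2n M X K f (h n) (X 1 \<omega>) (X 2 \<omega>))\<^sup>2 \<partial>M)
           \<sim>[sequentially] (\<lambda>n. \<integral>\<omega>. (K ((X 1 \<omega> - X 2 \<omega>) / h n))\<^sup>2 \<partial>M)"
proof (rule equiv_diff[OF _ EKj_lim[of 2, OF _ h]])
  show "(\<integral>s. K s ^ 2 \<partial>lborel) * (\<integral>x. f x ^ 2 \<partial>lborel) \<noteq> 0"
    using int_Kpow_pos(1)[of 2] int_f2_pos by auto
  show "h n > 0" for n by (rule h(1))
  show "(\<lambda>n. ((\<integral>\<omega>. (g2n M X K f (h n) (X 1 \<omega>) (X 2 \<omega>))\<^sup>2 \<partial>M) -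
      (\<integral>\<omega>. (K ((X 1 \<omega> - X 2 \<omega>) / h n))\<^sup>2 \<partial>M)) / h n) \<longlonglongrightarrow> 0"
  proof (rule Lim_null_comparison)
    show "(\<lambda>n. 15 * Sf\<^sup>2 * h n) \<longlonglongrightarrow> 0"
      using tendsto_mult_left[OF h(2), of "15 * Sf\<^sup>2"] by simp
    show "\<forall>\<^sub>F n in sequentially. norm (((\<integral>\<omega>. (g2n M X K f (h n) (X 1 \<omega>) (X 2 \<omega>))\<^sup>2 \<partial>M) -
      (\<integral>\<omega>. (K ((X 1 \<omega> - X 2 \<omega>) / h n))\<^sup>2 \<partial>M)) / h n) \<le> 15 * Sf\<^sup>2 * h n"
    proof (rule always_eventually, rule allI)
      fix n
      have hn: "h n > 0" by (rule h(1))
      have "norm (((\<integral>\<omega>. (g2n M X K f (h n) (X 1 \<omega>) (X 2 \<omega>))\<^sup>2 \<partial>M) -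
         (\<integral>\<omega>. (K ((X 1 \<omega> - X 2 \<omega>) / h n))\<^sup>2 \<partial>M)) / h n) \<le> (15 * (h n)\<^sup>2 * Sf\<^sup>2) / h n"
        using part2_diff[OF hn] hn by (simp add: divide_right_mono)
      also have "\<dots> = 15 * Sf\<^sup>2 * h n" using hn by (simp add: power2_eq_square)
      finally show "norm (((\<integral>\<omega>. (g2n M X K f (h n) (X 1 \<omega>) (X 2 \<omega>))\<^sup>2 \<partial>M) -
         (\<integral>\<omega>. (K ((X 1 \<omega> - X 2 \<omega>) / h n))\<^sup>2 \<partial>M)) / h n) \<le> 15 * Sf\<^sup>2 * h n" .
    qed
  qed
qed simp

lemma part4:
  assumes h: "\<And>n. h n > 0" "h \<longlonglongrightarrow> 0"
  shows "(\<lambda>n. \<integral>\<omega>. (g2n M X K f (h n) (X 1 \<omega>) (X 2 \<omega>)) ^ 4 \<partial>M)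
           \<sim>[sequentially] (\<lambda>n. \<integral>\<omega>. (K ((X 1 \<omega> - X 2 \<omega>) / h n)) ^ 4 \<partial>M)"
proof (rule equiv_diff[OF _ EKj_lim[of 4, OF _ h]])
  show "(\<integral>s. K s ^ 4 \<partial>lborel) * (\<integral>x. f x ^ 2 \<partial>lborel) \<noteq> 0"
    using int_Kpow_pos(1)[of 4] int_f2_pos by auto
  show "h n > 0" for n by (rule h(1))
  show "(\<lambda>n. ((\<integral>\<omega>. (g2n M X K f (h n) (X 1 \<omega>) (X 2 \<omega>)) ^ 4 \<partial>M) -
      (\<integral>\<omega>. (K ((X 1 \<omega> - X 2 \<omega>) / h n)) ^ 4 \<partial>M)) / h n) \<longlonglongrightarrow> 0"
  proof (rule Lim_null_comparison)
    show "(\<lambda>n. 48 * Sf\<^sup>2 * h n * (KB + 3 * h n * Sf)\<^sup>2) \<longlonglongrightarrow> 0"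
    proof -
      have "(\<lambda>n. 48 * Sf\<^sup>2 * h n * (KB + 3 * h n * Sf)\<^sup>2) \<longlonglongrightarrow> 48 * Sf\<^sup>2 * 0 * (KB + 3 * 0 * Sf)\<^sup>2"
        by (intro tendsto_intros h(2))
      then show ?thesis by simp
    qed
    show "\<forall>\<^sub>F n in sequentially. norm (((\<integral>\<omega>. (g2n M X K f (h n) (X 1 \<omega>) (X 2 \<omega>)) ^ 4 \<partial>M) -
      (\<integral>\<omega>. (K ((X 1 \<omega> - X 2 \<omega>) / h n)) ^ 4 \<partial>M)) / h n) \<le> 48 * Sf\<^sup>2 * h n * (KB + 3 * h n * Sf)\<^sup>2"
    proof (rule always_eventually, rule allI)
      fix n
      have hn: "h n > 0" by (rule h(1))
      have "norm (((\<integral>\<omega>. (g2n M X K f (h n) (X 1 \<omega>) (X 2 \<omega>)) ^ 4 \<partial>M) -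
         (\<integral>\<omega>. (K ((X 1 \<omega> - X 2 \<omega>) / h n)) ^ 4 \<partial>M)) / h n) \<le> (48 * (h n)\<^sup>2 * Sf\<^sup>2 * (KB + 3 * h n * Sf)\<^sup>2) / h n"
        using part4_diff[OF hn] hn by (simp add: divide_right_mono)
      also have "\<dots> = 48 * Sf\<^sup>2 * h n * (KB + 3 * h n * Sf)\<^sup>2" using hn by (simp add: power2_eq_square)
      finally show "norm (((\<integral>\<omega>. (g2n M X K f (h n) (X 1 \<omega>) (X 2 \<omega>)) ^ 4 \<partial>M) -
         (\<integral>\<omega>. (K ((X 1 \<omega> - X 2 \<omega>) / h n)) ^ 4 \<partial>M)) / h n) \<le> 48 * Sf\<^sup>2 * h n * (KB + 3 * h n * Sf)\<^sup>2" .
    qed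
  qed
qed simp

end

context setting begin

lemma Ksym2: "K ((x - y) / h) = K ((y - x) / h)"
  using K_sym[of "(y - x) / h"] by (simp add: minus_divide_left)

lemma leaf_bound:
  assumes h: "h > 0" and r: "r \<ge> 0"
  shows "(\<integral>\<^sup>+w. ennreal (K ((w - x) / h) + r) \<partial>Pf) \<le> ennreal (h * Sf + r)"
proof -
  have i1: "integrable lborel (\<lambda>w. f w * K ((x - w) / h))"
    using K_abs_le by (intro int_f_mult[where B=KB]) auto
  have "(\<integral>\<^sup>+w. ennreal (K ((w - x) / h) + r) \<partial>Pf) = ennreal (\<integral>w. f w * (K ((w - x) / h) + r) \<partial>lborel)"
    using K_nonneg r KB by (intro nn_Pf_real[where B="KB + r"]) (auto simp: abs_le_iff intro: add_mono)
  also have "(\<integral>w. f w * (K ((w - x) / h) + r) \<partial>lborel) = (\<integral>w. f w * K ((x - w) / h) + r * f w \<partial>lborel)"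
    by (rule Bochner_Integration.integral_cong) (auto simp: Ksym2[of _ x] algebra_simps)
  also have "\<dots> = (\<integral>w. f w * K ((x - w) / h) \<partial>lborel) + (\<integral>w. r * f w \<partial>lborel)"
    using i1 f_int by (intro Bochner_Integration.integral_add) auto
  also have "\<dots> = h * Ah h x + r" using aff[OF h, of K x] f_one unfolding Ah_def by simp
  also have "\<dots> \<le> h * Sf + r" using Ah_bounds(2)[OF h, of x] h by simp
  finally show ?thesis by (simp add: ennreal_leI)
qed

lemma path_bound:
  fixes a b c d :: nat
  assumes abcd: "a \<ge> 1" "b \<ge> 1" "c \<ge> 1" "d \<ge> 1" "distinct [a,b,c,d]" and h: "h > 0" and r: "r \<ge> 0"
  shows "(\<integral>\<omega>. (K ((X a \<omega> - X b \<omega>) / h) + r) * (K ((X b \<omega> - X c \<omega>) / h) + r) * (K ((X c \<omega> - X d \<omega>) / h) + r) \<partial>M)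
     \<le> (h * Sf + r) ^ 3"
proof -
  define L where "L x y = K ((x - y) / h) + r" for x y
  define B where "B = h * Sf + r"
  have B0: "B \<ge> 0" unfolding B_def using h Sf r by auto
  have Lnn: "0 \<le> L x y" for x y unfolding L_def using K_nonneg r by (simp add: add_nonneg_nonneg)
  have Lm[measurable]: "(\<lambda>p. L (fst p) (snd p)) \<in> borel_measurable (borel \<Otimes>\<^sub>M borel)" unfolding L_def by measurable
  have Lm1[measurable]: "(\<lambda>w. L w x) \<in> borel_measurable borel" for x unfolding L_def by measurable
  have leaf: "(\<integral>\<^sup>+w. ennreal (L w x) \<partial>Pf) \<le> ennreal B" for x
    unfolding L_def B_def by (rule leaf_bound[OF h r])
  have m3[measurable]: "(\<lambda>p. L (fst p) (fst (snd p)) * L (fst (snd p)) (fst (snd (snd p))) * L (fst (snd (snd p))) (snd (snd (snd p))))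
    \<in> borel_measurable (borel \<Otimes>\<^sub>M borel \<Otimes>\<^sub>M borel \<Otimes>\<^sub>M borel)" unfolding L_def by measurable
  have "(\<integral>\<^sup>+\<omega>. ennreal (L (X a \<omega>) (X b \<omega>) * L (X b \<omega>) (X c \<omega>) * L (X c \<omega>) (X d \<omega>)) \<partial>M)
    = (\<integral>\<^sup>+z. \<integral>\<^sup>+y. \<integral>\<^sup>+x. \<integral>\<^sup>+w. ennreal (L w x * L x y * L y z) \<partial>Pf \<partial>Pf \<partial>Pf \<partial>Pf)"
    using E4[OF abcd, of "\<lambda>p. ennreal (L (fst p) (fst (snd p)) * L (fst (snd p)) (fst (snd (snd p))) * L (fst (snd (snd p))) (snd (snd (snd p))))"]
    by simp
  also have "\<dots> \<le> (\<integral>\<^sup>+z. \<integral>\<^sup>+y. \<integral>\<^sup>+x. ennreal B * ennreal (L x y * L y z) \<partial>Pf \<partial>Pf \<partial>Pf)"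
  proof (intro nn_integral_mono)
    fix z y x
    have "(\<integral>\<^sup>+w. ennreal (L w x * L x y * L y z) \<partial>Pf) = (\<integral>\<^sup>+w. ennreal (L w x) * ennreal (L x y * L y z) \<partial>Pf)"
      using Lnn by (simp add: ennreal_mult mult.assoc)
    also have "\<dots> = (\<integral>\<^sup>+w. ennreal (L w x) \<partial>Pf) * ennreal (L x y * L y z)"
      by (rule nn_integral_multc) measurable
    also have "\<dots> \<le> ennreal B * ennreal (L x y * L y z)"
      using leaf by (intro mult_right_mono) auto
    finally show "(\<integral>\<^sup>+w. ennreal (L w x * L x y * L y z) \<partial>Pf) \<le> ennreal B * ennreal (L x y * L y z)" .
  qed
  also have "\<dots> \<le> (\<integral>\<^sup>+z. \<integral>\<^sup>+y. ennreal B * ennreal B * ennreal (L y z) \<partial>Pf \<partial>Pf)"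
  proof (intro nn_integral_mono)
    fix z y
    have "(\<integral>\<^sup>+x. ennreal B * ennreal (L x y * L y z) \<partial>Pf) = (\<integral>\<^sup>+x. ennreal (L x y) * (ennreal B * ennreal (L y z)) \<partial>Pf)"
      using Lnn by (simp add: ennreal_mult mult_ac)
    also have "\<dots> = (\<integral>\<^sup>+x. ennreal (L x y) \<partial>Pf) * (ennreal B * ennreal (L y z))"
      by (rule nn_integral_multc) measurable
    also have "\<dots> \<le> ennreal B * (ennreal B * ennreal (L y z))"
      using leaf by (intro mult_right_mono) auto
    finally show "(\<integral>\<^sup>+x. ennreal B * ennreal (L x y * L y z) \<partial>Pf) \<le> ennreal B * ennreal B * ennreal (L y z)"
      by (simp add: mult.assoc)
  qed
  also have "\<dots> \<le> (\<integral>\<^sup>+z. ennreal B * ennreal B * ennreal B \<partial>Pf)"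
  proof (intro nn_integral_mono)
    fix z
    have "(\<integral>\<^sup>+y. ennreal B * ennreal B * ennreal (L y z) \<partial>Pf) = ennreal B * ennreal B * (\<integral>\<^sup>+y. ennreal (L y z) \<partial>Pf)"
      by (rule nn_integral_cmult) measurable
    also have "\<dots> \<le> ennreal B * ennreal B * ennreal B"
      using leaf by (intro mult_left_mono) auto
    finally show "(\<integral>\<^sup>+y. ennreal B * ennreal B * ennreal (L y z) \<partial>Pf) \<le> ennreal B * ennreal B * ennreal B" .
  qed
  also have "\<dots> = ennreal (B ^ 3)" using B0 by (simp add: ennreal_mult power3_eq_cube)
  finally have nn: "(\<integral>\<^sup>+\<omega>. ennreal (L (X a \<omega>) (X b \<omega>) * L (X b \<omega>) (X c \<omega>) * L (X c \<omega>) (X d \<omega>)) \<partial>M) \<le> ennreal (B ^ 3)" .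
  have "(\<integral>\<omega>. L (X a \<omega>) (X b \<omega>) * L (X b \<omega>) (X c \<omega>) * L (X c \<omega>) (X d \<omega>) \<partial>M)
     = enn2real (\<integral>\<^sup>+\<omega>. ennreal (L (X a \<omega>) (X b \<omega>) * L (X b \<omega>) (X c \<omega>) * L (X c \<omega>) (X d \<omega>)) \<partial>M)"
    using abcd Lnn by (intro integral_eq_nn_integral) (auto simp: L_def)
  also have "\<dots> \<le> B ^ 3" using nn B0 by (intro enn2real_leI) auto
  finally show ?thesis unfolding L_def B_def .
qed

end

lemma abs3:
  fixes a b c A B C :: real
  assumes "\<bar>a\<bar> \<le> A" "\<bar>b\<bar> \<le> B" "\<bar>c\<bar> \<le> C"
  shows "\<bar>a * b * c\<bar> \<le> A * B * C"
proof -
  have ab: "\<bar>a * b\<bar> \<le> A * B" using assms by (simp add: abs_mult mult_mono)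
  have "\<bar>a * b\<bar> * \<bar>c\<bar> \<le> (A * B) * C"
    by (rule mult_mono[OF ab assms(3)]) (use ab in \<open>auto intro: order_trans[OF abs_ge_zero]\<close>)
  then show ?thesis by (simp add: abs_mult)
qed

lemma abs4:
  fixes a b c d A B C D :: real
  assumes "\<bar>a\<bar> \<le> A" "\<bar>b\<bar> \<le> B" "\<bar>c\<bar> \<le> C" "\<bar>d\<bar> \<le> D"
  shows "\<bar>a * b * c * d\<bar> \<le> A * B * C * D"
proof -
  have ab: "\<bar>a * b * c\<bar> \<le> A * B * C" using abs3 assms by blast
  have "\<bar>a * b * c\<bar> * \<bar>d\<bar> \<le> (A * B * C) * D"
    by (rule mult_mono[OF ab assms(4)]) (use ab in \<open>auto intro: order_trans[OF abs_ge_zero]\<close>)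
  then show ?thesis by (simp add: abs_mult)
qed

lemma prod4_close:
  fixes a1 a2 a3 a4 b1 b2 b3 b4 r L1 L2 L3 L4 :: real
  assumes d: "\<bar>a1 - b1\<bar> \<le> r" "\<bar>a2 - b2\<bar> \<le> r" "\<bar>a3 - b3\<bar> \<le> r" "\<bar>a4 - b4\<bar> \<le> r"
    and a: "\<bar>a1\<bar> \<le> L1" "\<bar>a2\<bar> \<le> L2" "\<bar>a3\<bar> \<le> L3" "\<bar>a4\<bar> \<le> L4"
    and b: "\<bar>b1\<bar> \<le> L1" "\<bar>b2\<bar> \<le> L2" "\<bar>b3\<bar> \<le> L3" "\<bar>b4\<bar> \<le> L4"
  shows "\<bar>a1 * a2 * a3 * a4 - b1 * b2 * b3 * b4\<bar> \<le> r * (L2 * L3 * L4 + L1 * L3 * L4 + L1 * L2 * L4 + L1 * L2 * L3)"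
proof -
  have e: "a1 * a2 * a3 * a4 - b1 * b2 * b3 * b4 =
    (a1 - b1) * a2 * a3 * a4 + b1 * (a2 - b2) * a3 * a4 + b1 * b2 * (a3 - b3) * a4 + b1 * b2 * b3 * (a4 - b4)"
    by (simp add: algebra_simps)
  have t1: "\<bar>(a1 - b1) * a2 * a3 * a4\<bar> \<le> r * L2 * L3 * L4" by (rule abs4[OF d(1) a(2) a(3) a(4)])
  have t2: "\<bar>b1 * (a2 - b2) * a3 * a4\<bar> \<le> L1 * r * L3 * L4" by (rule abs4[OF b(1) d(2) a(3) a(4)])
  have t3: "\<bar>b1 * b2 * (a3 - b3) * a4\<bar> \<le> L1 * L2 * r * L4" by (rule abs4[OF b(1) b(2) d(3) a(4)])
  have t4: "\<bar>b1 * b2 * b3 * (a4 - b4)\<bar> \<le> L1 * L2 * L3 * r" by (rule abs4[OF b(1) b(2) b(3) d(4)])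
  have "\<bar>a1 * a2 * a3 * a4 - b1 * b2 * b3 * b4\<bar> \<le>
     \<bar>(a1 - b1) * a2 * a3 * a4\<bar> + \<bar>b1 * (a2 - b2) * a3 * a4\<bar> + \<bar>b1 * b2 * (a3 - b3) * a4\<bar> + \<bar>b1 * b2 * b3 * (a4 - b4)\<bar>"
    unfolding e by linarith
  also have "\<dots> \<le> r * L2 * L3 * L4 + L1 * r * L3 * L4 + L1 * L2 * r * L4 + L1 * L2 * L3 * r"
    using t1 t2 t3 t4 by linarith
  finally show ?thesis by (simp add: algebra_simps)
qed

context setting begin

lemma part7_diff:
  assumes h: "h > 0"
  shows "\<bar>(\<integral>\<omega>. g2n M X K f h (X 1 \<omega>) (X 3 \<omega>) * g2n M X K f h (X 1 \<omega>) (X 4 \<omega>)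
                  * g2n M X K f h (X 2 \<omega>) (X 3 \<omega>) * g2n M X K f h (X 2 \<omega>) (X 4 \<omega>) \<partial>M)
      - (\<integral>\<omega>. K ((X 1 \<omega> - X 3 \<omega>) / h) * K ((X 1 \<omega> - X 4 \<omega>) / h) * K ((X 2 \<omega> - X 3 \<omega>) / h)
           * K ((X 2 \<omega> - X 4 \<omega>) / h) \<partial>M)\<bar> \<le> 768 * h ^ 4 * Sf ^ 4"
proof -
  define r where "r = 3 * h * Sf"
  define B where "B = h * Sf + r"
  define g where "g i j \<omega> = g2n M X K f h (X i \<omega>) (X j \<omega>)" for i j \<omega>
  define k where "k i j \<omega> = K ((X i \<omega> - X j \<omega>) / h)" for i j \<omega>
  define l where "l i j \<omega> = k i j \<omega> + r" for i j \<omega>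
  have r0: "0 \<le> r" unfolding r_def using h Sf by auto
  have gm[measurable]: "i \<ge> 1 \<Longrightarrow> j \<ge> 1 \<Longrightarrow> g i j \<in> borel_measurable M" for i j
    unfolding g_def using h by measurable
  have km[measurable]: "i \<ge> 1 \<Longrightarrow> j \<ge> 1 \<Longrightarrow> k i j \<in> borel_measurable M" for i j
    unfolding k_def by measurable
  have lm[measurable]: "i \<ge> 1 \<Longrightarrow> j \<ge> 1 \<Longrightarrow> l i j \<in> borel_measurable M" for i j
    unfolding l_def by measurable
  have gk: "\<bar>g i j \<omega> - k i j \<omega>\<bar> \<le> r" for i j \<omega> unfolding g_def k_def r_def by (rule g2n_close[OF h])
  have kl: "\<bar>k i j \<omega>\<bar> \<le> l i j \<omega>" for i j \<omega> unfolding l_def k_def using K_nonneg r0 by simp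
  have gl: "\<bar>g i j \<omega>\<bar> \<le> l i j \<omega>" for i j \<omega> using gk[of i j \<omega>] kl[of i j \<omega>] unfolding l_def k_def
    using K_nonneg[of "(X i \<omega> - X j \<omega>) / h"] by (auto simp: abs_le_iff)
  have lB: "\<bar>l i j \<omega>\<bar> \<le> KB + r" for i j \<omega> unfolding l_def k_def using K_nonneg KB r0 by (simp add: add_mono)
  have glB: "\<bar>g i j \<omega>\<bar> \<le> KB + r" for i j \<omega> using gl[of i j \<omega>] lB[of i j \<omega>] by linarith
  have klB: "\<bar>k i j \<omega>\<bar> \<le> KB + r" for i j \<omega> using kl[of i j \<omega>] lB[of i j \<omega>] by linarith
  let ?P = "\<lambda>\<omega>. g 1 3 \<omega> * g 1 4 \<omega> * g 2 3 \<omega> * g 2 4 \<omega>"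
  let ?Q = "\<lambda>\<omega>. k 1 3 \<omega> * k 1 4 \<omega> * k 2 3 \<omega> * k 2 4 \<omega>"
  define T where "T \<omega> = l 1 4 \<omega> * l 2 3 \<omega> * l 2 4 \<omega> + l 1 3 \<omega> * l 2 3 \<omega> * l 2 4 \<omega> + l 1 3 \<omega> * l 1 4 \<omega> * l 2 4 \<omega> + l 1 3 \<omega> * l 1 4 \<omega> * l 2 3 \<omega>" for \<omega>
  have abs_gl4: "\<bar>g a b \<omega> * g c d \<omega> * g e i \<omega> * g j m \<omega>\<bar> \<le> (KB + r) * (KB + r) * (KB + r) * (KB + r)" for a b c d e i j m \<omega>
    by (rule abs4) (rule glB)+
  have abs_kl4: "\<bar>k a b \<omega> * k c d \<omega> * k e i \<omega> * k j m \<omega>\<bar> \<le> (KB + r) * (KB + r) * (KB + r) * (KB + r)" for a b c d e i j m \<omega>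
    by (rule abs4) (rule klB)+
  have abs_l3: "\<bar>l a b \<omega> * l c d \<omega> * l e i \<omega>\<bar> \<le> (KB + r) * (KB + r) * (KB + r)" for a b c d e i \<omega>
    by (rule abs3) (rule lB)+
  have iP: "integrable M ?P" by (rule intM[OF _ abs_gl4]) measurable
  have iQ: "integrable M ?Q" by (rule intM[OF _ abs_kl4]) measurable
  have il3: "a \<ge> 1 \<Longrightarrow> b \<ge> 1 \<Longrightarrow> c \<ge> 1 \<Longrightarrow> d \<ge> 1 \<Longrightarrow> e \<ge> 1 \<Longrightarrow> i \<ge> 1 \<Longrightarrow>
      integrable M (\<lambda>\<omega>. l a b \<omega> * l c d \<omega> * l e i \<omega>)" for a b c d e i
    by (rule intM[OF _ abs_l3]) measurable
  have pw: "\<bar>?P \<omega> - ?Q \<omega>\<bar> \<le> r * T \<omega>" for \<omega>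
    unfolding T_def by (rule prod4_close[OF gk gk gk gk gl gl gl gl kl kl kl kl])
  have iT: "integrable M T" unfolding T_def by (intro Bochner_Integration.integrable_add il3) auto
  have lsym: "l i j \<omega> = l j i \<omega>" for i j \<omega> unfolding l_def k_def using Ksym2 by simp
  have pathI: "a \<ge> 1 \<Longrightarrow> b \<ge> 1 \<Longrightarrow> c \<ge> 1 \<Longrightarrow> d \<ge> 1 \<Longrightarrow> distinct [a,b,c,d] \<Longrightarrow>
     (\<integral>\<omega>. l a b \<omega> * l b c \<omega> * l c d \<omega> \<partial>M) \<le> B ^ 3" for a b c d
    unfolding l_def k_def B_def by (rule path_bound[OF _ _ _ _ _ h r0])
  have e1: "(\<integral>\<omega>. l 1 4 \<omega> * l 2 3 \<omega> * l 2 4 \<omega> \<partial>M) \<le> B ^ 3"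
  proof -
    have "(\<lambda>\<omega>. l 1 4 \<omega> * l 2 3 \<omega> * l 2 4 \<omega>) = (\<lambda>\<omega>. l 1 4 \<omega> * l 4 2 \<omega> * l 2 3 \<omega>)"
      using lsym[of 2 4] by (auto simp: fun_eq_iff mult_ac)
    then show ?thesis using pathI[of 1 4 2 3] by simp
  qed
  have e2: "(\<integral>\<omega>. l 1 3 \<omega> * l 2 3 \<omega> * l 2 4 \<omega> \<partial>M) \<le> B ^ 3"
  proof -
    have "(\<lambda>\<omega>. l 1 3 \<omega> * l 2 3 \<omega> * l 2 4 \<omega>) = (\<lambda>\<omega>. l 1 3 \<omega> * l 3 2 \<omega> * l 2 4 \<omega>)"
      using lsym[of 2 3] by (auto simp: fun_eq_iff mult_ac)
    then show ?thesis using pathI[of 1 3 2 4] by simp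
  qed
  have e3: "(\<integral>\<omega>. l 1 3 \<omega> * l 1 4 \<omega> * l 2 4 \<omega> \<partial>M) \<le> B ^ 3"
  proof -
    have "(\<lambda>\<omega>. l 1 3 \<omega> * l 1 4 \<omega> * l 2 4 \<omega>) = (\<lambda>\<omega>. l 3 1 \<omega> * l 1 4 \<omega> * l 4 2 \<omega>)"
      using lsym[of 1 3] lsym[of 2 4] by (auto simp: fun_eq_iff mult_ac)
    then show ?thesis using pathI[of 3 1 4 2] by simp
  qed
  have e4: "(\<integral>\<omega>. l 1 3 \<omega> * l 1 4 \<omega> * l 2 3 \<omega> \<partial>M) \<le> B ^ 3"
  proof -
    have "(\<lambda>\<omega>. l 1 3 \<omega> * l 1 4 \<omega> * l 2 3 \<omega>) = (\<lambda>\<omega>. l 4 1 \<omega> * l 1 3 \<omega> * l 3 2 \<omega>)"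
      using lsym[of 1 4] lsym[of 2 3] by (auto simp: fun_eq_iff mult_ac)
    then show ?thesis using pathI[of 4 1 3 2] by simp
  qed
  have ET: "(\<integral>\<omega>. T \<omega> \<partial>M) \<le> 4 * B ^ 3"
  proof -
    have "(\<integral>\<omega>. T \<omega> \<partial>M) = (\<integral>\<omega>. l 1 4 \<omega> * l 2 3 \<omega> * l 2 4 \<omega> \<partial>M) + (\<integral>\<omega>. l 1 3 \<omega> * l 2 3 \<omega> * l 2 4 \<omega> \<partial>M)
       + (\<integral>\<omega>. l 1 3 \<omega> * l 1 4 \<omega> * l 2 4 \<omega> \<partial>M) + (\<integral>\<omega>. l 1 3 \<omega> * l 1 4 \<omega> * l 2 3 \<omega> \<partial>M)"
      unfolding T_def by (subst Bochner_Integration.integral_add, (intro Bochner_Integration.integrable_add il3; simp)+)+ simp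
    then show ?thesis using e1 e2 e3 e4 by linarith
  qed
  have "\<bar>(\<integral>\<omega>. ?P \<omega> \<partial>M) - (\<integral>\<omega>. ?Q \<omega> \<partial>M)\<bar> = \<bar>\<integral>\<omega>. ?P \<omega> - ?Q \<omega> \<partial>M\<bar>"
    using iP iQ by simp
  also have "\<dots> \<le> (\<integral>\<omega>. \<bar>?P \<omega> - ?Q \<omega>\<bar> \<partial>M)" by (rule integral_abs_bound)
  also have "\<dots> \<le> (\<integral>\<omega>. r * T \<omega> \<partial>M)"
    using iP iQ iT pw by (intro integral_mono) auto
  also have "\<dots> = r * (\<integral>\<omega>. T \<omega> \<partial>M)" by simp
  also have "\<dots> \<le> r * (4 * B ^ 3)" using ET r0 by (intro mult_left_mono) auto
  also have "\<dots> = 768 * h ^ 4 * Sf ^ 4" unfolding r_def B_def by (simp add: power_def algebra_simps)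
  finally show ?thesis unfolding g_def k_def .
qed

end

context setting begin

definition "Qk u = (\<integral>s. K s * K (u + s) \<partial>lborel)"
definition "Hk h z u = (\<integral>s. (K s * K (u + s)) * f (z - h * s) \<partial>lborel)"
definition "Vk h z = (\<integral>u. f (z + h * u) * (Hk h z u)\<^sup>2 \<partial>lborel)"

lemma Qk_meas[measurable]: "Qk \<in> borel_measurable borel"
  unfolding Qk_def by measurable

lemma Hk_meas[measurable]: "(\<lambda>p. Hk h (fst p) (snd p)) \<in> borel_measurable (borel \<Otimes>\<^sub>M borel)"
  unfolding Hk_def by measurable

lemma Hk_meas2[measurable]: "Hk h z \<in> borel_measurable borel"
  unfolding Hk_def by measurable

lemma Vk_meas[measurable]: "Vk h \<in> borel_measurable borel"
  unfolding Vk_def Hk_def by measurable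

lemma Lu_int: "integrable lborel (\<lambda>s. K s * K (u + s))"
proof (rule Bochner_Integration.integrable_bound[where f="\<lambda>s. KB * K s"])
  show "integrable lborel (\<lambda>s. KB * K s)" using K_int by auto
  show "AE s in lborel. norm (K s * K (u + s)) \<le> norm (KB * K s)"
    using K_nonneg KB by (auto intro!: mult_left_mono simp: mult.commute[of KB])
qed measurable

lemma Qk_nonneg: "0 \<le> Qk u"
  unfolding Qk_def using K_nonneg by (intro Bochner_Integration.integral_nonneg) auto

lemma Qk_le: "Qk u \<le> KB"
proof -
  have "Qk u \<le> (\<integral>s. KB * K s \<partial>lborel)"
    unfolding Qk_def using Lu_int K_int K_nonneg KB
    by (intro integral_mono) (auto intro!: mult_left_mono simp: mult.commute[of KB])
  then show ?thesis using K_one by simp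
qed

lemma nn_K_one: "(\<integral>\<^sup>+x. ennreal (K x) \<partial>lborel) = 1"
  using nn_integral_eq_integral[OF K_int] K_nonneg K_one by simp

lemma nn_Qk_one: "(\<integral>\<^sup>+u. ennreal (Qk u) \<partial>lborel) = 1"
proof -
  have "(\<integral>\<^sup>+u. ennreal (Qk u) \<partial>lborel) = (\<integral>\<^sup>+u. \<integral>\<^sup>+s. ennreal (K s * K (u + s)) \<partial>lborel \<partial>lborel)"
    unfolding Qk_def using Lu_int K_nonneg by (intro nn_integral_cong) (simp add: nn_integral_eq_integral)
  also have "\<dots> = (\<integral>\<^sup>+s. \<integral>\<^sup>+u. ennreal (K s * K (u + s)) \<partial>lborel \<partial>lborel)"
    by (rule lborel_pair.Fubini') measurable
  also have "\<dots> = (\<integral>\<^sup>+s. ennreal (K s) * (\<integral>\<^sup>+u. ennreal (K (u + s)) \<partial>lborel) \<partial>lborel)"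
    using K_nonneg by (intro nn_integral_cong) (simp add: ennreal_mult nn_integral_cmult)
  also have "\<dots> = (\<integral>\<^sup>+s. ennreal (K s) \<partial>lborel)"
  proof (intro nn_integral_cong)
    fix s
    have "(\<integral>\<^sup>+u. ennreal (K (u + s)) \<partial>lborel) = (\<integral>\<^sup>+x. ennreal (K x) \<partial>lborel)"
      using nn_integral_real_affine[of "\<lambda>x. ennreal (K x)" 1 s] by (simp add: add.commute)
    then show "ennreal (K s) * (\<integral>\<^sup>+u. ennreal (K (u + s)) \<partial>lborel) = ennreal (K s)"
      using nn_K_one by simp
  qed
  also have "\<dots> = 1" by (rule nn_K_one)
  finally show ?thesis .
qed

lemma Qk_int: "integrable lborel Qk"
  using nn_Qk_one Qk_nonneg by (intro integrableI_nonneg) auto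

lemma Qk_one: "(\<integral>u. Qk u \<partial>lborel) = 1"
  using nn_Qk_one nn_integral_eq_integral[OF Qk_int] Qk_nonneg by simp

lemma Qk2_int: "integrable lborel (\<lambda>u. (Qk u)\<^sup>2)"
proof (rule Bochner_Integration.integrable_bound[where f="\<lambda>u. KB * Qk u"])
  show "integrable lborel (\<lambda>u. KB * Qk u)" using Qk_int by auto
  show "AE u in lborel. norm ((Qk u)\<^sup>2) \<le> norm (KB * Qk u)"
    using Qk_nonneg Qk_le KB by (auto simp: power2_eq_square intro!: mult_right_mono)
qed measurable

lemma Qk2_pos: "(\<integral>u. (Qk u)\<^sup>2 \<partial>lborel) > 0"
proof -
  have "(\<integral>u. (Qk u)\<^sup>2 \<partial>lborel) \<noteq> 0"
  proof
    assume "(\<integral>u. (Qk u)\<^sup>2 \<partial>lborel) = 0"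
    then have "AE u in lborel. (Qk u)\<^sup>2 = 0" using integral_nonneg_eq_0_iff_AE[OF Qk2_int] by simp
    then have "AE u in lborel. Qk u = 0" by simp
    then have "(\<integral>u. Qk u \<partial>lborel) = 0" by (rule integral_eq_zero_AE)
    then show False using Qk_one by simp
  qed
  moreover have "(\<integral>u. (Qk u)\<^sup>2 \<partial>lborel) \<ge> 0" by (intro Bochner_Integration.integral_nonneg) auto
  ultimately show ?thesis by linarith
qed

lemma f4_int: "integrable lborel (\<lambda>x. f x ^ 4)"
proof -
  have "integrable lborel (\<lambda>x. f x * f x ^ 3)"
  proof (rule int_f_mult[where B="Sf ^ 3"])
    fix x show "\<bar>f x ^ 3\<bar> \<le> Sf ^ 3" using f_nonneg[of x] Sf(2)[of x] by (simp add: power_mono)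
  qed measurable
  then show ?thesis by (simp add: power_def mult_ac eval_nat_numeral)
qed

lemma f4_pos: "(\<integral>x. f x ^ 4 \<partial>lborel) > 0"
proof -
  have "(\<integral>x. f x ^ 4 \<partial>lborel) \<noteq> 0"
  proof
    assume "(\<integral>x. f x ^ 4 \<partial>lborel) = 0"
    then have "AE x in lborel. f x ^ 4 = 0" using integral_nonneg_eq_0_iff_AE[OF f4_int] by simp
    then have "AE x in lborel. f x = 0" by simp
    then have "(\<integral>x. f x \<partial>lborel) = 0" by (rule integral_eq_zero_AE)
    then show False using f_one by simp
  qed
  moreover have "(\<integral>x. f x ^ 4 \<partial>lborel) \<ge> 0" by (intro Bochner_Integration.integral_nonneg) auto
  ultimately show ?thesis by linarith
qed

lemma d2_eq:
  "(\<integral>x. \<integral>t. \<integral>s. K s * K t * K (x + s) * K (x + t) \<partial>lborel \<partial>lborel \<partial>lborel) = (\<integral>u. (Qk u)\<^sup>2 \<partial>lborel)"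
proof (rule Bochner_Integration.integral_cong[OF refl])
  fix x
  have inner: "(\<integral>s. K s * K t * K (x + s) * K (x + t) \<partial>lborel) = (K t * K (x + t)) * Qk x" for t
  proof -
    have "(\<lambda>s. K s * K t * K (x + s) * K (x + t)) = (\<lambda>s. (K t * K (x + t)) * (K s * K (x + s)))"
      by (auto simp: fun_eq_iff mult_ac)
    then show ?thesis unfolding Qk_def by simp
  qed
  have "(\<integral>t. \<integral>s. K s * K t * K (x + s) * K (x + t) \<partial>lborel \<partial>lborel) = (\<integral>t. (K t * K (x + t)) * Qk x \<partial>lborel)"
    by (rule Bochner_Integration.integral_cong[OF refl]) (rule inner)
  also have "\<dots> = Qk x * Qk x" unfolding Qk_def by simp
  finally show "(\<integral>t. \<integral>s. K s * K t * K (x + s) * K (x + t) \<partial>lborel \<partial>lborel) = (Qk x)\<^sup>2"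
    by (simp add: power2_eq_square)
qed

end

context setting begin

lemma Hk_bound: "\<bar>Hk h z u\<bar> \<le> Sf * Qk u"
proof -
  have "\<bar>Hk h z u\<bar> \<le> Sf * (\<integral>s. \<bar>K s * K (u + s)\<bar> \<partial>lborel)"
    unfolding Hk_def by (rule A_bound[OF Lu_int])
  also have "(\<integral>s. \<bar>K s * K (u + s)\<bar> \<partial>lborel) = Qk u"
    unfolding Qk_def using K_nonneg by (simp add: abs_mult)
  finally show ?thesis .
qed

lemma Hk_lim: "h \<longlonglongrightarrow> 0 \<Longrightarrow> (\<lambda>n. Hk (h n) z u) \<longlonglongrightarrow> f z * Qk u"
  unfolding Hk_def Qk_def using A_lim[OF Lu_int, of h u z] by (simp add: mult.commute)

lemma Hk2_bound: "(Hk h z u)\<^sup>2 \<le> Sf\<^sup>2 * (Qk u)\<^sup>2"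
proof -
  have "\<bar>Hk h z u\<bar>^2 \<le> (Sf * Qk u)^2" using Hk_bound by (intro power_mono) auto
  then show ?thesis by (simp add: power_mult_distrib)
qed

lemma Vk_integrand_bound: "\<bar>f (z + h * u) * (Hk h z u)\<^sup>2\<bar> \<le> Sf ^ 3 * (Qk u)\<^sup>2"
proof -
  have "\<bar>f (z + h * u) * (Hk h z u)\<^sup>2\<bar> = f (z + h * u) * (Hk h z u)\<^sup>2" using f_nonneg by (simp add: abs_mult)
  also have "\<dots> \<le> Sf * (Sf\<^sup>2 * (Qk u)\<^sup>2)" using Sf Hk2_bound f_nonneg by (intro mult_mono) auto
  also have "\<dots> = Sf ^ 3 * (Qk u)\<^sup>2" by (simp add: power_def eval_nat_numeral)
  finally show ?thesis .
qed

lemma Vk_int: "integrable lborel (\<lambda>u. f (z + h * u) * (Hk h z u)\<^sup>2)"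
proof (rule Bochner_Integration.integrable_bound[where f="\<lambda>u. Sf ^ 3 * (Qk u)\<^sup>2"])
  show "integrable lborel (\<lambda>u. Sf ^ 3 * (Qk u)\<^sup>2)" using Qk2_int by auto
  show "AE u in lborel. norm (f (z + h * u) * (Hk h z u)\<^sup>2) \<le> norm (Sf ^ 3 * (Qk u)\<^sup>2)"
    using Vk_integrand_bound Sf by (auto intro: order_trans)
qed measurable

lemma Vk_bound: "\<bar>Vk h z\<bar> \<le> Sf ^ 3 * (\<integral>u. (Qk u)\<^sup>2 \<partial>lborel)"
proof -
  have "\<bar>Vk h z\<bar> \<le> (\<integral>u. \<bar>f (z + h * u) * (Hk h z u)\<^sup>2\<bar> \<partial>lborel)"
    unfolding Vk_def by (rule integral_abs_bound)
  also have "\<dots> \<le> (\<integral>u. Sf ^ 3 * (Qk u)\<^sup>2 \<partial>lborel)"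
    using Vk_int Qk2_int Vk_integrand_bound by (intro integral_mono) auto
  finally show ?thesis by simp
qed

lemma Vk_lim:
  assumes h: "h \<longlonglongrightarrow> 0"
  shows "(\<lambda>n. Vk (h n) z) \<longlonglongrightarrow> f z ^ 3 * (\<integral>u. (Qk u)\<^sup>2 \<partial>lborel)"
proof -
  have "(\<lambda>n. Vk (h n) z) \<longlonglongrightarrow> (\<integral>u. f z * (f z * Qk u)\<^sup>2 \<partial>lborel)"
    unfolding Vk_def
  proof (rule integral_dominated_convergence[where w="\<lambda>u. Sf ^ 3 * (Qk u)\<^sup>2"])
    show "(\<lambda>u. f z * (f z * Qk u)\<^sup>2) \<in> borel_measurable lborel" by measurable
    show "(\<lambda>u. f (z + h n * u) * (Hk (h n) z u)\<^sup>2) \<in> borel_measurable lborel" for n by measurable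
    show "integrable lborel (\<lambda>u. Sf ^ 3 * (Qk u)\<^sup>2)" using Qk2_int by auto
    show "AE u in lborel. (\<lambda>n. f (z + h n * u) * (Hk (h n) z u)\<^sup>2) \<longlonglongrightarrow> f z * (f z * Qk u)\<^sup>2"
    proof (intro AE_I2 tendsto_intros Hk_lim h)
      fix u
      have "(\<lambda>n. z + h n * u) \<longlonglongrightarrow> z + 0 * u" by (intro tendsto_intros h)
      then have "(\<lambda>n. z + h n * u) \<longlonglongrightarrow> z" by simp
      moreover have "isCont f z" using f_cont continuous_on_eq_continuous_at by blast
      ultimately show "(\<lambda>n. f (z + h n * u)) \<longlonglongrightarrow> f z" using isCont_tendsto_compose by blast
    qed
    show "AE u in lborel. norm (f (z + h n * u) * (Hk (h n) z u)\<^sup>2) \<le> Sf ^ 3 * (Qk u)\<^sup>2" for n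
      using Vk_integrand_bound by auto
  qed
  also have "(\<integral>u. f z * (f z * Qk u)\<^sup>2 \<partial>lborel) = f z ^ 3 * (\<integral>u. (Qk u)\<^sup>2 \<partial>lborel)"
  proof -
    have "(\<lambda>u. f z * (f z * Qk u)\<^sup>2) = (\<lambda>u. f z ^ 3 * (Qk u)\<^sup>2)"
      by (auto simp: fun_eq_iff power_mult_distrib power_def eval_nat_numeral)
    then show ?thesis by simp
  qed
  finally show ?thesis .
qed

lemma main_lim:
  assumes h: "h \<longlonglongrightarrow> 0"
  shows "(\<lambda>n. \<integral>z. f z * Vk (h n) z \<partial>lborel) \<longlonglongrightarrow> (\<integral>u. (Qk u)\<^sup>2 \<partial>lborel) * (\<integral>x. f x ^ 4 \<partial>lborel)"
proof -
  let ?C = "\<integral>u. (Qk u)\<^sup>2 \<partial>lborel"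
  have "(\<lambda>n. \<integral>z. f z * Vk (h n) z \<partial>lborel) \<longlonglongrightarrow> (\<integral>z. f z * (f z ^ 3 * ?C) \<partial>lborel)"
  proof (rule integral_dominated_convergence[where w="\<lambda>z. f z * (Sf ^ 3 * ?C)"])
    show "(\<lambda>z. f z * (f z ^ 3 * ?C)) \<in> borel_measurable lborel" by measurable
    show "(\<lambda>z. f z * Vk (h n) z) \<in> borel_measurable lborel" for n by measurable
    show "integrable lborel (\<lambda>z. f z * (Sf ^ 3 * ?C))" using f_int by auto
    show "AE z in lborel. (\<lambda>n. f z * Vk (h n) z) \<longlonglongrightarrow> f z * (f z ^ 3 * ?C)"
      by (intro AE_I2 tendsto_intros Vk_lim h)
    show "AE z in lborel. norm (f z * Vk (h n) z) \<le> f z * (Sf ^ 3 * ?C)" for n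
      using Vk_bound f_nonneg by (auto simp: abs_mult intro!: mult_left_mono)
  qed
  also have "(\<integral>z. f z * (f z ^ 3 * ?C) \<partial>lborel) = ?C * (\<integral>x. f x ^ 4 \<partial>lborel)"
  proof -
    have "(\<lambda>z. f z * (f z ^ 3 * ?C)) = (\<lambda>z. ?C * f z ^ 4)"
      by (auto simp: fun_eq_iff power_def eval_nat_numeral)
    then show ?thesis by simp
  qed
  finally show ?thesis .
qed

end

context setting begin

lemma G_eq:
  assumes h: "h > 0"
  shows "(\<integral>w. f w * (K ((z - w) / h) * K ((y - w) / h)) \<partial>lborel) = h * Hk h z ((y - z) / h)"
proof -
  have "(\<integral>w. f w * (K ((z - w) / h) * K ((y - w) / h)) \<partial>lborel) =
     (\<integral>w. f w * (\<lambda>t. K t * K ((y - z) / h + t)) ((z - w) / h) \<partial>lborel)"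
  proof (rule Bochner_Integration.integral_cong[OF refl])
    fix w
    have "(y - z) / h + (z - w) / h = (y - w) / h" by (simp add: add_divide_distrib[symmetric])
    then show "f w * (K ((z - w) / h) * K ((y - w) / h)) = f w * (\<lambda>t. K t * K ((y - z) / h + t)) ((z - w) / h)"
      by simp
  qed
  also have "\<dots> = h * (\<integral>s. (K s * K ((y - z) / h + s)) * f (z - h * s) \<partial>lborel)"
    by (rule aff[OF h])
  finally show ?thesis unfolding Hk_def .
qed

lemma W_eq:
  assumes h: "h > 0"
  shows "(\<integral>y. f y * (h * Hk h z ((y - z) / h))\<^sup>2 \<partial>lborel) = h ^ 3 * Vk h z"
proof -
  have "(\<integral>y. f y * (h * Hk h z ((y - z) / h))\<^sup>2 \<partial>lborel) =
     \<bar>h\<bar> *\<^sub>R (\<integral>u. f (z + h * u) * (h * Hk h z ((z + h * u - z) / h))\<^sup>2 \<partial>lborel)"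
    using h by (intro lborel_integral_real_affine) auto
  also have "(\<lambda>u. f (z + h * u) * (h * Hk h z ((z + h * u - z) / h))\<^sup>2) = (\<lambda>u. h\<^sup>2 * (f (z + h * u) * (Hk h z u)\<^sup>2))"
    using h by (auto simp: fun_eq_iff power_mult_distrib)
  finally show ?thesis using h unfolding Vk_def by (simp add: power_def eval_nat_numeral)
qed

lemma EQ_eq:
  assumes h: "h > 0"
  shows "(\<integral>\<omega>. K ((X 1 \<omega> - X 3 \<omega>) / h) * K ((X 1 \<omega> - X 4 \<omega>) / h) * K ((X 2 \<omega> - X 3 \<omega>) / h)
           * K ((X 2 \<omega> - X 4 \<omega>) / h) \<partial>M) = h ^ 3 * (\<integral>z. f z * Vk h z \<partial>lborel)"
proof -
  define k where "k x y = K ((x - y) / h)" for x y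
  have knn: "0 \<le> k x y" for x y unfolding k_def by (rule K_nonneg)
  have kB: "k x y \<le> KB" for x y unfolding k_def by (rule KB)
  have km[measurable]: "(\<lambda>p. k (fst p) (snd p)) \<in> borel_measurable (borel \<Otimes>\<^sub>M borel)" unfolding k_def by measurable
  have km1[measurable]: "k z \<in> borel_measurable borel" for z unfolding k_def by measurable
  define G where "G z y = (\<integral>w. f w * (k z w * k y w) \<partial>lborel)" for z y
  have Gm[measurable]: "(\<lambda>p. G (fst p) (snd p)) \<in> borel_measurable (borel \<Otimes>\<^sub>M borel)" unfolding G_def k_def by measurable
  have Gm1[measurable]: "G z \<in> borel_measurable borel" for z unfolding G_def k_def by measurable
  have kk_b: "0 \<le> k z w * k y w" "k z w * k y w \<le> KB * KB" for z y w
    using knn[of z w] knn[of y w] kB[of z w] kB[of y w] by (auto intro: mult_mono)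
  have Gb: "0 \<le> G z y" "G z y \<le> KB * KB" for z y
    unfolding G_def using int_fg_bounds[of "\<lambda>w. k z w * k y w" "KB * KB"] kk_b by (auto simp: k_def)
  define W where "W z = (\<integral>y. f y * (G z y)\<^sup>2 \<partial>lborel)" for z
  have Wm[measurable]: "W \<in> borel_measurable borel" unfolding W_def G_def k_def by measurable
  have G2b: "0 \<le> (G z y)\<^sup>2" "(G z y)\<^sup>2 \<le> (KB * KB)\<^sup>2" for z y using Gb[of z y] by (auto intro: power_mono)
  have Wb: "0 \<le> W z" "W z \<le> (KB * KB)\<^sup>2" for z
    unfolding W_def using int_fg_bounds[of "\<lambda>y. (G z y)\<^sup>2" "(KB * KB)\<^sup>2"] G2b by auto
  define \<psi> where "\<psi> p = ennreal (k (snd (snd (snd p))) (fst (snd p)) * k (snd (snd (snd p))) (fst p)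
      * k (fst (snd (snd p))) (fst (snd p)) * k (fst (snd (snd p))) (fst p))" for p :: "real \<times> real \<times> real \<times> real"
  have \<psi>m[measurable]: "\<psi> \<in> borel_measurable (borel \<Otimes>\<^sub>M borel \<Otimes>\<^sub>M borel \<Otimes>\<^sub>M borel)" unfolding \<psi>_def k_def by measurable
  have nnE: "(\<integral>\<^sup>+\<omega>. ennreal (k (X 1 \<omega>) (X 3 \<omega>) * k (X 1 \<omega>) (X 4 \<omega>) * k (X 2 \<omega>) (X 3 \<omega>) * k (X 2 \<omega>) (X 4 \<omega>)) \<partial>M)
     = (\<integral>\<^sup>+z. \<integral>\<^sup>+y. \<integral>\<^sup>+x. \<integral>\<^sup>+w. \<psi> (w, x, y, z) \<partial>Pf \<partial>Pf \<partial>Pf \<partial>Pf)"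
    using E4[of 4 3 2 1 \<psi>] by (simp add: \<psi>_def)
  also have "\<dots> = (\<integral>\<^sup>+z. \<integral>\<^sup>+y. \<integral>\<^sup>+x. ennreal (G z y) * ennreal (k z x * k y x) \<partial>Pf \<partial>Pf \<partial>Pf)"
  proof (intro nn_integral_cong)
    fix z y x
    have "(\<integral>\<^sup>+w. \<psi> (w, x, y, z) \<partial>Pf) = (\<integral>\<^sup>+w. ennreal (k z w * k y w) * ennreal (k z x * k y x) \<partial>Pf)"
      unfolding \<psi>_def using knn by (intro nn_integral_cong) (simp add: ennreal_mult[symmetric] mult_ac)
    also have "\<dots> = (\<integral>\<^sup>+w. ennreal (k z w * k y w) \<partial>Pf) * ennreal (k z x * k y x)"
      by (rule nn_integral_multc) measurable
    also have "(\<integral>\<^sup>+w. ennreal (k z w * k y w) \<partial>Pf) = ennreal (G z y)"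
      unfolding G_def using kk_b by (intro nn_Pf_real[where B="KB * KB"]) (auto simp: abs_le_iff k_def intro: order_trans)
    finally show "(\<integral>\<^sup>+w. \<psi> (w, x, y, z) \<partial>Pf) = ennreal (G z y) * ennreal (k z x * k y x)" .
  qed
  also have "\<dots> = (\<integral>\<^sup>+z. \<integral>\<^sup>+y. ennreal ((G z y)\<^sup>2) \<partial>Pf \<partial>Pf)"
  proof (intro nn_integral_cong)
    fix z y
    have "(\<integral>\<^sup>+x. ennreal (G z y) * ennreal (k z x * k y x) \<partial>Pf) = ennreal (G z y) * (\<integral>\<^sup>+x. ennreal (k z x * k y x) \<partial>Pf)"
      by (rule nn_integral_cmult) measurable
    also have "(\<integral>\<^sup>+x. ennreal (k z x * k y x) \<partial>Pf) = ennreal (G z y)"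
      unfolding G_def using kk_b by (intro nn_Pf_real[where B="KB * KB"]) (auto simp: abs_le_iff k_def intro: order_trans)
    finally show "(\<integral>\<^sup>+x. ennreal (G z y) * ennreal (k z x * k y x) \<partial>Pf) = ennreal ((G z y)\<^sup>2)"
      using Gb by (simp add: ennreal_mult[symmetric] power2_eq_square)
  qed
  also have "\<dots> = (\<integral>\<^sup>+z. ennreal (W z) \<partial>Pf)"
  proof (intro nn_integral_cong)
    fix z show "(\<integral>\<^sup>+y. ennreal ((G z y)\<^sup>2) \<partial>Pf) = ennreal (W z)"
      unfolding W_def using G2b by (intro nn_Pf_real[where B="(KB * KB)\<^sup>2"]) auto
  qed
  also have "\<dots> = ennreal (\<integral>z. f z * W z \<partial>lborel)"
    using Wb by (intro nn_Pf_real[where B="(KB * KB)\<^sup>2"]) auto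
  finally have nnE' : "(\<integral>\<^sup>+\<omega>. ennreal (k (X 1 \<omega>) (X 3 \<omega>) * k (X 1 \<omega>) (X 4 \<omega>) * k (X 2 \<omega>) (X 3 \<omega>) * k (X 2 \<omega>) (X 4 \<omega>)) \<partial>M)
     = ennreal (\<integral>z. f z * W z \<partial>lborel)" .
  have "(\<integral>\<omega>. k (X 1 \<omega>) (X 3 \<omega>) * k (X 1 \<omega>) (X 4 \<omega>) * k (X 2 \<omega>) (X 3 \<omega>) * k (X 2 \<omega>) (X 4 \<omega>) \<partial>M)
      = enn2real (\<integral>\<^sup>+\<omega>. ennreal (k (X 1 \<omega>) (X 3 \<omega>) * k (X 1 \<omega>) (X 4 \<omega>) * k (X 2 \<omega>) (X 3 \<omega>) * k (X 2 \<omega>) (X 4 \<omega>)) \<partial>M)"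
    using knn by (intro integral_eq_nn_integral) (auto simp: k_def)
  also have "\<dots> = (\<integral>z. f z * W z \<partial>lborel)"
    using nnE' int_fg_bounds(1)[OF Wm Wb(2) Wb(1)] by simp
  also have "\<dots> = (\<integral>z. f z * (h ^ 3 * Vk h z) \<partial>lborel)"
  proof (rule Bochner_Integration.integral_cong[OF refl])
    fix z
    have "W z = (\<integral>y. f y * (h * Hk h z ((y - z) / h))\<^sup>2 \<partial>lborel)"
      unfolding W_def G_def k_def using G_eq[OF h] by simp
    then show "f z * W z = f z * (h ^ 3 * Vk h z)" using W_eq[OF h] by simp
  qed
  also have "\<dots> = (\<integral>z. h ^ 3 * (f z * Vk h z) \<partial>lborel)"
    by (rule Bochner_Integration.integral_cong[OF refl]) (simp add: mult.left_commute)
  also have "\<dots> = h ^ 3 * (\<integral>z. f z * Vk h z \<partial>lborel)"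
    by (rule integral_mult_right_zero)
  finally show ?thesis unfolding k_def .
qed

end

context setting begin

lemma part7:
  assumes h: "\<And>n. h n > 0" "h \<longlonglongrightarrow> 0"
  shows "(\<lambda>n. \<integral>\<omega>. g2n M X K f (h n) (X 1 \<omega>) (X 3 \<omega>) * g2n M X K f (h n) (X 1 \<omega>) (X 4 \<omega>)
                  * g2n M X K f (h n) (X 2 \<omega>) (X 3 \<omega>) * g2n M X K f (h n) (X 2 \<omega>) (X 4 \<omega>) \<partial>M)
           \<sim>[sequentially] (\<lambda>n. ((\<integral>x. \<integral>t. \<integral>s. K s * K t * K (x + s) * K (x + t) \<partial>lborel \<partial>lborel \<partial>lborel)
               * (\<integral>y. f y ^ 4 \<partial>lborel)) * (h n) ^ 3)"
proof (rule equiv_lim)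
  define P where "P n = (\<integral>\<omega>. g2n M X K f (h n) (X 1 \<omega>) (X 3 \<omega>) * g2n M X K f (h n) (X 1 \<omega>) (X 4 \<omega>)
                  * g2n M X K f (h n) (X 2 \<omega>) (X 3 \<omega>) * g2n M X K f (h n) (X 2 \<omega>) (X 4 \<omega>) \<partial>M)" for n
  define Q where "Q n = (\<integral>\<omega>. K ((X 1 \<omega> - X 3 \<omega>) / h n) * K ((X 1 \<omega> - X 4 \<omega>) / h n) * K ((X 2 \<omega> - X 3 \<omega>) / h n)
           * K ((X 2 \<omega> - X 4 \<omega>) / h n) \<partial>M)" for n
  show "h n ^ 3 > 0" for n using h(1)[of n] by simp
  show "(\<integral>x. \<integral>t. \<integral>s. K s * K t * K (x + s) * K (x + t) \<partial>lborel \<partial>lborel \<partial>lborel) * (\<integral>y. f y ^ 4 \<partial>lborel) \<noteq> 0"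
    unfolding d2_eq using Qk2_pos f4_pos by simp
  have q: "(\<lambda>n. Q n / h n ^ 3) \<longlonglongrightarrow> (\<integral>u. (Qk u)\<^sup>2 \<partial>lborel) * (\<integral>x. f x ^ 4 \<partial>lborel)"
  proof -
    have "(\<lambda>n. Q n / h n ^ 3) = (\<lambda>n. \<integral>z. f z * Vk (h n) z \<partial>lborel)"
    proof
      fix n show "Q n / h n ^ 3 = (\<integral>z. f z * Vk (h n) z \<partial>lborel)"
        unfolding Q_def using EQ_eq[OF h(1)[of n]] h(1)[of n] by simp
    qed
    then show ?thesis using main_lim[OF h(2)] by simp
  qed
  have d: "(\<lambda>n. (P n - Q n) / h n ^ 3) \<longlonglongrightarrow> 0"
  proof (rule Lim_null_comparison)
    show "(\<lambda>n. 768 * Sf ^ 4 * h n) \<longlonglongrightarrow> 0"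
      using tendsto_mult_left[OF h(2), of "768 * Sf ^ 4"] by simp
    show "\<forall>\<^sub>F n in sequentially. norm ((P n - Q n) / h n ^ 3) \<le> 768 * Sf ^ 4 * h n"
    proof (rule always_eventually, rule allI)
      fix n
      have hn: "h n > 0" by (rule h(1))
      have "norm ((P n - Q n) / h n ^ 3) \<le> (768 * h n ^ 4 * Sf ^ 4) / h n ^ 3"
        using part7_diff[OF hn] hn unfolding P_def Q_def by (simp add: divide_right_mono)
      also have "\<dots> = 768 * Sf ^ 4 * h n" using hn by (simp add: power_def eval_nat_numeral)
      finally show "norm ((P n - Q n) / h n ^ 3) \<le> 768 * Sf ^ 4 * h n" .
    qed
  qed
  have "(\<lambda>n. (P n - Q n) / h n ^ 3 + Q n / h n ^ 3) \<longlonglongrightarrow> 0 + (\<integral>u. (Qk u)\<^sup>2 \<partial>lborel) * (\<integral>x. f x ^ 4 \<partial>lborel)"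
    by (intro tendsto_add d q)
  moreover have "(\<lambda>n. (P n - Q n) / h n ^ 3 + Q n / h n ^ 3) = (\<lambda>n. P n / h n ^ 3)"
    by (auto simp: fun_eq_iff diff_divide_distrib)
  ultimately show "(\<lambda>n. P n / h n ^ 3) \<longlonglongrightarrow> (\<integral>x. \<integral>t. \<integral>s. K s * K t * K (x + s) * K (x + t) \<partial>lborel \<partial>lborel \<partial>lborel) * (\<integral>y. f y ^ 4 \<partial>lborel)"
    unfolding d2_eq by simp
qed

end

theorem lemmaA3:
  fixes M :: "'a measure" and X :: "nat \<Rightarrow> 'a \<Rightarrow> real"
    and f K :: "real \<Rightarrow> real" and h :: "nat \<Rightarrow> real"
  assumes P: "prob_space M"
    and indep: "prob_space.indep_vars M (\<lambda>_. borel) X {1..}"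
    and distr: "\<And>i. i \<ge> 1 \<Longrightarrow> distributed M lborel (X i) (\<lambda>x. ennreal (f x))"
    and f_nonneg: "\<And>x. f x \<ge> 0"
    and f_bdd: "bounded (range f)"
    and f_uc: "uniformly_continuous_on UNIV f"
    and K_meas: "K \<in> borel_measurable borel"
    and K_nonneg: "\<And>x. K x \<ge> 0"
    and K_bdd: "bounded (range K)"
    and K_sym: "\<And>x. K (- x) = K x"
    and K_int: "integrable lborel K"
    and K_one: "(\<integral>x. K x \<partial>lborel) = 1"
    and h_pos: "\<And>n. h n > 0"
    and h_lim: "h \<longlonglongrightarrow> 0"
  defines "c \<equiv> \<lambda>j::nat. (\<integral>s. K s ^ j \<partial>lborel) * (\<integral>y. f y ^ 2 \<partial>lborel)"
    and "d1 \<equiv> (\<integral>x. (f x - (\<integral>y. f y ^ 2 \<partial>lborel))\<^sup>2 * f x \<partial>lborel)"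
    and "d2 \<equiv> (\<integral>x. \<integral>t. \<integral>s. K s * K t * K (x + s) * K (x + t) \<partial>lborel \<partial>lborel \<partial>lborel)
               * (\<integral>y. f y ^ 4 \<partial>lborel)"
  shows "((\<lambda>n. \<integral>\<omega>. K ((X 1 \<omega> - X 2 \<omega>) / h n) \<partial>M) \<sim>[sequentially] (\<lambda>n. c 1 * h n)) \<and>
    ((\<lambda>n. \<integral>\<omega>. (g2n M X K f (h n) (X 1 \<omega>) (X 2 \<omega>))\<^sup>2 \<partial>M)
           \<sim>[sequentially] (\<lambda>n. \<integral>\<omega>. (K ((X 1 \<omega> - X 2 \<omega>) / h n))\<^sup>2 \<partial>M)) \<and>
    ((\<lambda>n. \<integral>\<omega>. (K ((X 1 \<omega> - X 2 \<omega>) / h n))\<^sup>2 \<partial>M) \<sim>[sequentially] (\<lambda>n. c 2 * h n)) \<and>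
    ((\<lambda>n. \<integral>\<omega>. (g2n M X K f (h n) (X 1 \<omega>) (X 2 \<omega>)) ^ 4 \<partial>M)
           \<sim>[sequentially] (\<lambda>n. \<integral>\<omega>. (K ((X 1 \<omega> - X 2 \<omega>) / h n)) ^ 4 \<partial>M)) \<and>
    ((\<lambda>n. \<integral>\<omega>. (K ((X 1 \<omega> - X 2 \<omega>) / h n)) ^ 4 \<partial>M) \<sim>[sequentially] (\<lambda>n. c 4 * h n)) \<and>
    ((\<lambda>n. \<integral>\<omega>. (g1n M X K f (h n) (X 1 \<omega>))\<^sup>2 \<partial>M) \<sim>[sequentially] (\<lambda>n. d1 * (h n)\<^sup>2)) \<and>
    ((\<lambda>n. \<integral>\<omega>. g2n M X K f (h n) (X 1 \<omega>) (X 3 \<omega>) * g2n M X K f (h n) (X 1 \<omega>) (X 4 \<omega>)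
                  * g2n M X K f (h n) (X 2 \<omega>) (X 3 \<omega>) * g2n M X K f (h n) (X 2 \<omega>) (X 4 \<omega>) \<partial>M)
           \<sim>[sequentially] (\<lambda>n. d2 * (h n) ^ 3))"
proof -
  interpret S: setting M X f K
    by (rule setting.intro[OF P indep distr f_nonneg f_bdd f_uc K_meas K_nonneg K_bdd K_sym K_int K_one])
  have hh: "\<And>n. h n > 0" "h \<longlonglongrightarrow> 0" by (fact h_pos h_lim)+
  have p1: "(\<lambda>n. \<integral>\<omega>. K ((X 1 \<omega> - X 2 \<omega>) / h n) \<partial>M) \<sim>[sequentially] (\<lambda>n. c 1 * h n)"
    using S.EKj_equiv[of 1 h, OF _ hh] unfolding c_def by simp
  have p3: "(\<lambda>n. \<integral>\<omega>. (K ((X 1 \<omega> - X 2 \<omega>) / h n))\<^sup>2 \<partial>M) \<sim>[sequentially] (\<lambda>n. c 2 * h n)"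
    using S.EKj_equiv[of 2 h, OF _ hh] unfolding c_def by simp
  have p5: "(\<lambda>n. \<integral>\<omega>. (K ((X 1 \<omega> - X 2 \<omega>) / h n)) ^ 4 \<partial>M) \<sim>[sequentially] (\<lambda>n. c 4 * h n)"
    using S.EKj_equiv[of 4 h, OF _ hh] unfolding c_def by simp
  have p6: "(\<lambda>n. \<integral>\<omega>. (g1n M X K f (h n) (X 1 \<omega>))\<^sup>2 \<partial>M) \<sim>[sequentially] (\<lambda>n. d1 * (h n)\<^sup>2)"
    using S.part6[OF hh] unfolding d1_def .
  have p7: "(\<lambda>n. \<integral>\<omega>. g2n M X K f (h n) (X 1 \<omega>) (X 3 \<omega>) * g2n M X K f (h n) (X 1 \<omega>) (X 4 \<omega>)
                  * g2n M X K f (h n) (X 2 \<omega>) (X 3 \<omega>) * g2n M X K f (h n) (X 2 \<omega>) (X 4 \<omega>) \<partial>M)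
           \<sim>[sequentially] (\<lambda>n. d2 * (h n) ^ 3)"
    using S.part7[OF hh] unfolding d2_def .
  show ?thesis using p1 S.part2[OF hh] p3 S.part4[OF hh] p5 p6 p7 by blast
qed

end
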